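(* For every $\rho\in\mathfrak M_d$: (i) $\chi_*(\bar\rho)\le\chi_*(\rho)$; (ii) $\sup_\theta R^{\mathrm{fc}}_\theta(\bar\rho)\le\sup_\theta R^{\mathrm{fc}}_\theta(\rho)$, the suprema being over $\theta\in\Delta_d$ with all $n\theta_i$ integers; (iii) $\Sigma(\bar\rho)=\frac{\operatorname{tr}\Sigma(\rho)}{d-1}I_{d-1}$.
   Context: Fix $d\ge2$, $n\ge1$. Let $H\in\mathbb R^{d\times(d-1)}$ have orthonormal columns spanning $\{u\in\mathbb R^d:\mathbf 1^\top u=0\}$, $\gamma_i:=H^\top e_i$, $\mathcal X_d:=\{x\in\mathbb R^{d-1}:1+\gamma_i^\top x\ge0\ \forall i\}$, $\Delta_d$ the probability simplex. An anchored law is a Borel probability measure $\rho$ on $\mathcal X_d$ with $\int x\,\rho(dx)=0$; $\mathfrak M_d$ is the set of anchored laws; $W_\rho(B\mid i):=\int_B(1+\gamma_i^\top x)\rho(dx)$; $\Sigma(\rho):=\int xx^\top\rho(dx)$. Budget: $\chi_*(\rho):=\max_{i\ne j}\int\frac{((\gamma_j-\gamma_i)^\top x)^2}{1+\gamma_i^\top x}\rho(dx)$, with the integrand $0$ where $1+\gamma_i^\top x=0$ and $(\gamma_j-\gamma_i)^\top x=0$, and $+\infty$ where $1+\gamma_i^\top x=0\ne(\gamma_j-\gamma_i)^\top x$. Fixed-composition risk: for $\theta\in\Delta_d$ with $n\theta_i\in\mathbb Z$, let $X_1,\dots,X_n$ be independent with exactly $n\theta_i$ drawn from $W_\rho(\cdot\mid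 i)$, $\widehat\theta_\rho:=\mathbf 1/d+H\Sigma(\rho)^{-1}\frac1n\sum_mX_m$ and $R^{\mathrm{fc}}_\theta(\rho):=\mathbb E\|\widehat\theta_\rho-\theta\|_2^2$, with the convention $R^{\mathrm{fc}}_\theta(\rho):=+\infty$ whenever $\Sigma(\rho)$ is singular. Symmetrization: for a permutation $\pi$ of $[d]$ with matrix $\Pi$, $P_\pi:=H^\top\Pi H$, and $\bar\rho:=\frac1{d!}\sum_\pi(P_\pi)_\#\rho$. *)

theory Defs
  imports "HOL-Probability.Probability"
begin

text \<open>Dimensions are types: 'd indexes R^d, 'k indexes R^(d-1) (CARD('k) = CARD('d) - 1).
  H :: real^'k^'d is a d x (d-1) matrix.\<close>

definition valid_H :: "real^'k^'d \<Rightarrow> bool" where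
  "valid_H H \<longleftrightarrow> transpose H ** H = mat 1 \<and>
     range (\<lambda>v. H *v v) = {u :: real^'d. (\<Sum>i\<in>UNIV. u $ i) = 0}"

definition gamma :: "real^'k^'d \<Rightarrow> 'd \<Rightarrow> real^'k" where
  "gamma H i = transpose H *v axis i 1"

definition Xd :: "real^'k^'d \<Rightarrow> (real^'k) set" where
  "Xd H = {x. \<forall>i. 1 + gamma H i \<bullet> x \<ge> 0}"

definition anchored :: "real^'k^'d \<Rightarrow> (real^'k) measure \<Rightarrow> bool" where
  "anchored H \<rho> \<longleftrightarrow> prob_space \<rho> \<and> sets \<rho> = sets borel \<and> emeasure \<rho> (Xd H) = 1 \<and>
     integrable \<rho> (\<lambda>x. x) \<and> integral\<^sup>L \<rho> (\<lambda>x. x) = 0"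

definition W :: "real^'k^'d \<Rightarrow> (real^'k) measure \<Rightarrow> 'd \<Rightarrow> (real^'k) measure" where
  "W H \<rho> i = density \<rho> (\<lambda>x. ennreal (1 + gamma H i \<bullet> x))"

definition Sigma_mat :: "(real^'k) measure \<Rightarrow> real^'k^'k" where
  "Sigma_mat \<rho> = (\<chi> a b. integral\<^sup>L \<rho> (\<lambda>x. x $ a * x $ b))"

definition chi_integrand :: "real^'k^'d \<Rightarrow> 'd \<Rightarrow> 'd \<Rightarrow> real^'k \<Rightarrow> ennreal" where
  "chi_integrand H i j x =
     (if 1 + gamma H i \<bullet> x = 0
      then (if (gamma H j - gamma H i) \<bullet> x = 0 then 0 else \<infinity>)
      else ennreal (((gamma H j - gamma H i) \<bullet> x)\<^sup>2 / (1 + gamma H i \<bullet> x)))"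

definition chi_star :: "real^'k^'d \<Rightarrow> (real^'k) measure \<Rightarrow> ennreal" where
  "chi_star H \<rho> = Max ((\<lambda>(i,j). \<integral>\<^sup>+ x. chi_integrand H i j x \<partial>\<rho>) ` {(i,j). i \<noteq> j})"

definition prob_simplex :: "(real^'d) set" where
  "prob_simplex = {\<theta>. (\<forall>i. \<theta> $ i \<ge> 0) \<and> (\<Sum>i\<in>UNIV. \<theta> $ i) = 1}"

definition Theta_n :: "nat \<Rightarrow> (real^'d) set" where
  "Theta_n n = {\<theta>\<in>prob_simplex. \<forall>i. \<exists>k::nat. real n * \<theta> $ i = real k}"

definition theta_hat :: "real^'k^'d \<Rightarrow> (real^'k) measure \<Rightarrow> nat \<Rightarrow> (nat \<Rightarrow> real^'k) \<Rightarrow> real^'d" where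
  "theta_hat H \<rho> n X = (\<chi> i. 1 / real CARD('d)) +
      H *v (matrix_inv (Sigma_mat \<rho>) *v ((1 / real n) *\<^sub>R (\<Sum>m<n. X m)))"

text \<open>A labelling of the samples 0..n-1 by classes with exactly n*theta_i samples of class i.
  The risk does not depend on which such labelling is chosen.\<close>
definition labelling :: "nat \<Rightarrow> real^'d \<Rightarrow> (nat \<Rightarrow> 'd)" where
  "labelling n \<theta> = (SOME lab. \<forall>i. real (card {m. m < n \<and> lab m = i}) = real n * \<theta> $ i)"

definition R_fc :: "real^'k^'d \<Rightarrow> nat \<Rightarrow> real^'d \<Rightarrow> (real^'k) measure \<Rightarrow> ennreal" where
  "R_fc H n \<theta> \<rho> =
     (if \<not> invertible (Sigma_mat \<rho>) then \<infinity>
      else \<integral>\<^sup>+ X. ennreal ((norm (theta_hat H \<rho> n X - \<theta>))\<^sup>2)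
              \<partial>(PiM {..<n} (\<lambda>m. W H \<rho> (labelling n \<theta> m))))"

definition perm_mat :: "('d \<Rightarrow> 'd) \<Rightarrow> real^'d^'d" where
  "perm_mat \<pi> = (\<chi> a b. if a = \<pi> b then 1 else 0)"

definition P_perm :: "real^'k^'d \<Rightarrow> ('d \<Rightarrow> 'd) \<Rightarrow> real^'k^'k" where
  "P_perm H \<pi> = transpose H ** perm_mat \<pi> ** H"

definition sym_law :: "real^'k^'d \<Rightarrow> (real^'k) measure \<Rightarrow> (real^'k) measure" where
  "sym_law H \<rho> = measure_of UNIV (sets borel)
     (\<lambda>A. (\<Sum>\<pi>\<in>{\<pi>. \<pi> permutes (UNIV :: 'd set)}.
             emeasure (distr \<rho> borel (\<lambda>x. P_perm H \<pi> *v x)) A) / of_nat (fact CARD('d)))"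

end

theory Submission
  imports Defs
begin

declare transpose_matrix_vector [simp del]

lemma sum_vec1: "(\<Sum>c\<in>UNIV. (vec 1 :: real^'d) $ c) = real CARD('d)"
  by simp

lemma matrix_inv_props:
  fixes A :: "real^'n^'n"
  assumes "invertible A"
  shows "A ** matrix_inv A = mat 1" "matrix_inv A ** A = mat 1"
proof -
  from assms obtain B where "A ** B = mat 1 \<and> B ** A = mat 1" unfolding invertible_def by blast
  then have "A ** matrix_inv A = mat 1 \<and> matrix_inv A ** A = mat 1"
    unfolding matrix_inv_def by (rule someI)
  then show "A ** matrix_inv A = mat 1" "matrix_inv A ** A = mat 1" by auto
qed

lemma matrix_inv_unique':
  fixes A B :: "real^'n^'n"
  assumes "A ** B = mat 1" "B ** A = mat 1"
  shows "matrix_inv A = B"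
proof -
  have inv: "invertible A" using assms unfolding invertible_def by blast
  have "matrix_inv A = matrix_inv A ** (A ** B)" using assms by (simp add: matrix_mul_rid)
  also have "\<dots> = (matrix_inv A ** A) ** B" by (simp add: matrix_mul_assoc)
  also have "\<dots> = B" using matrix_inv_props[OF inv] by (simp add: matrix_mul_lid)
  finally show ?thesis .
qed

context
  fixes H :: "real^'k^'d"
  assumes vH: "valid_H H"
begin

lemma HtH: "transpose H ** H = mat 1" using vH unfolding valid_H_def by auto

lemma HtHv: "transpose H *v (H *v v) = v"
  by (simp add: matrix_vector_mul_assoc HtH)

lemma Hv_sum: "(\<Sum>c\<in>UNIV. (H *v v) $ c) = 0"
proof -
  have "H *v v \<in> range (\<lambda>v. H *v v)" by auto
  then show ?thesis using vH unfolding valid_H_def by auto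
qed

lemma in_range_H: "(\<Sum>c\<in>UNIV. u $ c) = 0 \<Longrightarrow> \<exists>w. u = H *v w"
  using vH unfolding valid_H_def by (metis (mono_tags, lifting) imageE mem_Collect_eq)

lemma H_col_sum: "(\<Sum>c\<in>UNIV. H $ c $ a) = 0"
proof -
  have "(H *v axis a 1) $ c = H $ c $ a" for c
    by (simp add: matrix_vector_mult_def axis_def if_distrib cong: if_cong)
  then show ?thesis using Hv_sum[of "axis a 1"] by simp
qed

lemma Ht_one: "transpose H *v vec 1 = 0"
  by (simp add: vec_eq_iff matrix_vector_mult_def transpose_def H_col_sum)

lemma HHt: "H *v (transpose H *v u) = u - ((\<Sum>c\<in>UNIV. u $ c) / real CARD('d)) *\<^sub>R vec 1"
proof -
  define m where "m = (\<Sum>c\<in>UNIV. u $ c) / real CARD('d)"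
  have "(\<Sum>c\<in>UNIV. (u - m *\<^sub>R vec 1) $ c) = 0"
    by (simp add: m_def sum_subtractf sum_distrib_left[symmetric])
  then obtain w where w: "u - m *\<^sub>R vec 1 = H *v w" using in_range_H by blast
  have u: "u = H *v w + m *\<^sub>R vec 1" using w by (metis diff_add_cancel)
  have "H *v (transpose H *v u) = H *v (transpose H *v (H *v w)) + m *\<^sub>R (H *v (transpose H *v vec 1))"
    by (simp add: u matrix_vector_right_distrib matrix_vector_mult_scaleR)
  also have "\<dots> = H *v w"
  proof -
    have t1: "transpose H *v (H *v w) = w" by (simp add: matrix_vector_mul_assoc HtH)
    show ?thesis by (simp only: t1 Ht_one) simp
  qed
  finally show ?thesis using w by (simp add: m_def)
qed

lemma gamma_inner: "gamma H i \<bullet> x = (H *v x) $ i"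
  by (simp add: gamma_def inner_vec_def matrix_vector_mult_def transpose_def axis_def
      if_distrib cong: if_cong)

lemma inner_H: "(H *v v) \<bullet> (H *v w) = v \<bullet> w"
proof -
  have "(H *v v) \<bullet> (H *v w) = ((H *v w) v* H) \<bullet> v"
    by (subst dot_lmul_matrix) (rule inner_commute)
  also have "(H *v w) v* H = w"
    by (simp add: transpose_matrix_vector[symmetric] matrix_vector_mul_assoc HtH)
  finally show ?thesis by (simp add: inner_commute)
qed

lemma norm_H: "norm (H *v v) = norm v"
  by (simp add: norm_eq_sqrt_inner inner_H)

lemma gamma_gamma: "gamma H i \<bullet> gamma H j = (if i = j then 1 else 0) - 1 / real CARD('d)"
proof -
  have "gamma H i \<bullet> gamma H j = (H *v (transpose H *v axis j 1)) $ i"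
    by (simp only: gamma_inner) (simp add: gamma_def)
  also have "\<dots> = (if i = j then 1 else 0) - 1 / real CARD('d)"
    by (simp add: HHt axis_def if_distrib cong: if_cong)
  finally show ?thesis .
qed

lemma sum_gamma_inner: "(\<Sum>i\<in>UNIV. gamma H i \<bullet> x) = 0"
  by (simp add: gamma_inner Hv_sum)

lemma perm_mat_mult:
  assumes "\<pi> permutes (UNIV::'d set)"
  shows "(perm_mat \<pi> *v y) $ a = y $ (inv \<pi> a)"
proof -
  have e: "(a = \<pi> b) = (b = inv \<pi> a)" for b
    using permutes_inverses[OF assms] by metis
  have "(perm_mat \<pi> *v y) $ a = (\<Sum>b\<in>UNIV. (if a = \<pi> b then 1 else 0) * y $ b)"
    unfolding matrix_vector_mult_def perm_mat_def by simp
  also have "\<dots> = (\<Sum>b\<in>UNIV. (if b = inv \<pi> a then y $ b else 0))"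
    by (rule sum.cong) (auto simp: e)
  also have "\<dots> = y $ (inv \<pi> a)" by simp
  finally show ?thesis .
qed

lemma P_expand: "P_perm H \<pi> *v x = transpose H *v (perm_mat \<pi> *v (H *v x))"
  by (simp add: P_perm_def matrix_vector_mul_assoc matrix_mul_assoc)

lemma HP:
  assumes "\<pi> permutes (UNIV::'d set)"
  shows "H *v (P_perm H \<pi> *v x) = (\<chi> i. (H *v x) $ (inv \<pi> i))"
proof -
  let ?y = "H *v x"
  have pm: "perm_mat \<pi> *v ?y = (\<chi> i. ?y $ (inv \<pi> i))"
    by (simp add: vec_eq_iff perm_mat_mult[OF assms])
  have "(\<Sum>c\<in>UNIV. (\<chi> i. ?y $ (inv \<pi> i)) $ c) = (\<Sum>c\<in>UNIV. ?y $ c)"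
    using sum.permute[OF permutes_inv[OF assms], of "\<lambda>c. ?y $ c"] by (simp add: o_def)
  then have "(\<Sum>c\<in>UNIV. (\<chi> i. ?y $ (inv \<pi> i)) $ c) = 0" using Hv_sum by simp
  then show ?thesis
    by (simp add: P_expand pm HHt)
qed

lemma gamma_P:
  assumes "\<pi> permutes (UNIV::'d set)"
  shows "gamma H i \<bullet> (P_perm H \<pi> *v x) = gamma H (inv \<pi> i) \<bullet> x"
  by (simp add: gamma_inner HP[OF assms])

lemma norm_P:
  assumes "\<pi> permutes (UNIV::'d set)"
  shows "norm (P_perm H \<pi> *v x) = norm x"
proof -
  let ?y = "H *v x"
  have "norm (P_perm H \<pi> *v x) = norm (H *v (P_perm H \<pi> *v x))" by (simp add: norm_H)
  also have "\<dots> = norm (\<chi> i. ?y $ (inv \<pi> i))" by (simp add: HP[OF assms])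
  also have "\<dots> = norm ?y"
  proof -
    have "(\<Sum>i\<in>UNIV. ((\<chi> i. ?y $ (inv \<pi> i)) $ i)^2) = (\<Sum>i\<in>UNIV. (?y $ i)^2)"
      using sum.permute[OF permutes_inv[OF assms], of "\<lambda>c. (?y $ c)^2"] by (simp add: o_def)
    then show ?thesis by (simp add: norm_vec_def L2_set_def)
  qed
  also have "\<dots> = norm x" by (simp add: norm_H)
  finally show ?thesis .
qed

lemma Xd_iff: "x \<in> Xd H \<longleftrightarrow> (\<forall>i. 0 \<le> 1 + (H *v x) $ i)"
  by (simp add: Xd_def gamma_inner)

lemma Xd_bound:
  assumes "x \<in> Xd H"
  shows "norm x \<le> real CARD('d) * real CARD('d)"
proof -
  let ?y = "H *v x"
  have lo: "-1 \<le> ?y $ i" for i using assms by (simp add: Xd_iff) (smt (verit))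
  have hi: "?y $ i \<le> real CARD('d)" for i
  proof -
    have "?y $ i = - (\<Sum>j\<in>UNIV - {i}. ?y $ j)"
      using Hv_sum[of x] sum.remove[of UNIV i "\<lambda>j. ?y $ j"] by simp
    also have "\<dots> = (\<Sum>j\<in>UNIV - {i}. - ?y $ j)" by (simp add: sum_negf)
    also have "\<dots> \<le> (\<Sum>j\<in>UNIV - {i}. 1)"
      by (rule sum_mono) (use lo in force)
    also have "\<dots> \<le> real CARD('d)"
      by simp
    finally show ?thesis .
  qed
  have "norm x = norm ?y" by (simp add: norm_H)
  also have "\<dots> \<le> (\<Sum>i\<in>UNIV. \<bar>?y $ i\<bar>)" by (rule norm_le_l1_cart)
  also have "\<dots> \<le> (\<Sum>i\<in>(UNIV::'d set). real CARD('d))"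
  proof (rule sum_mono)
    fix i :: 'd
    have "1 \<le> real CARD('d)" by simp
    then show "\<bar>?y $ i\<bar> \<le> real CARD('d)" using lo[of i] hi[of i] by linarith
  qed
  also have "\<dots> = real CARD('d) * real CARD('d)" by simp
  finally show ?thesis .
qed

lemma Xd_closed: "closed (Xd H)"
proof -
  have "Xd H = (\<Inter>i. {x. 0 \<le> 1 + gamma H i \<bullet> x})" unfolding Xd_def by auto
  then show ?thesis by (auto intro!: closed_INT closed_Collect_le continuous_intros)
qed

lemma Xd_borel: "Xd H \<in> sets borel"
  using Xd_closed by (simp add: borel_closed)

lemma P_Xd:
  assumes "\<pi> permutes (UNIV::'d set)" "x \<in> Xd H"
  shows "P_perm H \<pi> *v x \<in> Xd H"
  using assms by (simp add: Xd_def gamma_P)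

end

abbreviation Perms :: "('d::finite \<Rightarrow> 'd) set" where
  "Perms \<equiv> {\<pi>. \<pi> permutes (UNIV::'d set)}"

lemma finite_Perms: "finite (Perms :: ('d::finite \<Rightarrow> 'd) set)"
  by (rule finite_permutations) simp

lemma card_Perms: "card (Perms :: ('d::finite \<Rightarrow> 'd) set) = fact CARD('d)"
  by (rule card_permutations) simp_all

lemma perm_sum_inv_shift:
  fixes f :: "('d::finite \<Rightarrow> 'd) \<Rightarrow> real"
  assumes "\<sigma> permutes (UNIV::'d set)"
  shows "(\<Sum>\<pi>\<in>Perms. f \<pi>) = (\<Sum>\<pi>\<in>Perms. f (\<pi> \<circ> \<sigma>))"
  by (rule sum_permutations_compose_right[OF assms])

lemma perm_sum1:
  fixes y :: "'d::finite \<Rightarrow> real"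
  assumes y0: "sum y UNIV = 0"
  shows "(\<Sum>\<pi>\<in>Perms. y (\<pi> i)) = 0"
proof -
  define S where "S i = (\<Sum>\<pi>\<in>Perms. y (\<pi> i))" for i
  have const: "S j = S i" for j
  proof -
    have "S j = (\<Sum>\<pi>\<in>Perms. y ((\<pi> \<circ> Transposition.transpose i j) j))"
      unfolding S_def by (rule perm_sum_inv_shift) (simp add: permutes_swap_id)
    also have "\<dots> = S i" by (simp add: S_def)
    finally show ?thesis .
  qed
  have "(\<Sum>j\<in>UNIV. S j) = (\<Sum>j\<in>(UNIV::'d set). S i)"
    by (rule sum.cong[OF refl]) (rule const)
  then have "real CARD('d) * S i = (\<Sum>j\<in>UNIV. S j)" by simp
  also have "\<dots> = (\<Sum>\<pi>\<in>Perms. \<Sum>j\<in>UNIV. y (\<pi> j))" unfolding S_def by (rule sum.swap)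
  also have "\<dots> = (\<Sum>\<pi>\<in>(Perms::('d\<Rightarrow>'d) set). sum y UNIV)"
  proof (rule sum.cong)
    fix \<pi> :: "'d \<Rightarrow> 'd" assume "\<pi> \<in> Perms"
    then have "\<pi> permutes UNIV" by simp
    then show "(\<Sum>j\<in>UNIV. y (\<pi> j)) = sum y UNIV"
      using sum.permute[of \<pi> UNIV y] by (simp add: o_def)
  qed simp
  also have "\<dots> = 0" by (simp add: y0)
  finally show ?thesis by (simp add: S_def)
qed

lemma perm_sum2:
  fixes y :: "'d::finite \<Rightarrow> real"
  assumes y0: "sum y UNIV = 0" and d2: "CARD('d) \<ge> 2"
  shows "(\<Sum>\<pi>\<in>Perms. y (\<pi> c) * y (\<pi> e)) = real (fact CARD('d)) *
     (if c = e then (\<Sum>j\<in>UNIV. (y j)^2) / real CARD('d)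
      else - (\<Sum>j\<in>UNIV. (y j)^2) / (real CARD('d) * (real CARD('d) - 1)))"
proof -
  define S where "S c e = (\<Sum>\<pi>\<in>Perms. y (\<pi> c) * y (\<pi> e))" for c e
  define Q where "Q = (\<Sum>j\<in>UNIV. (y j)^2)"
  define d where "d = real CARD('d)"
  define F where "F = real (fact CARD('d) :: nat)"
  have d2': "d \<ge> 2" using d2 unfolding d_def by simp
  have invar: "S (\<sigma> c) (\<sigma> e) = S c e" if "\<sigma> permutes UNIV" for \<sigma> c e
  proof -
    have "S c e = (\<Sum>\<pi>\<in>Perms. y ((\<pi> \<circ> \<sigma>) c) * y ((\<pi> \<circ> \<sigma>) e))"
      unfolding S_def by (rule perm_sum_inv_shift[OF that])
    then show ?thesis by (simp add: S_def)
  qed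
  have diag_const: "S j j = S c c" for j c
    using invar[of "Transposition.transpose j c" j j] by (simp add: permutes_swap_id)
  have diag_sum: "(\<Sum>j\<in>UNIV. S j j) = F * Q"
  proof -
    have "(\<Sum>j\<in>UNIV. S j j) = (\<Sum>\<pi>\<in>Perms. \<Sum>j\<in>UNIV. (y (\<pi> j))^2)"
      unfolding S_def by (subst sum.swap) (simp add: power2_eq_square)
    also have "\<dots> = (\<Sum>\<pi>\<in>(Perms::('d\<Rightarrow>'d) set). Q)"
    proof -
      have "(\<Sum>j\<in>UNIV. (y (\<pi> j))^2) = Q" if "\<pi> \<in> Perms" for \<pi> :: "'d \<Rightarrow> 'd"
      proof -
        from that have "\<pi> permutes UNIV" by simp
        then show ?thesis
          using sum.permute[of \<pi> UNIV "\<lambda>j. (y j)^2"] by (simp add: o_def Q_def)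
      qed
      then show ?thesis by (auto intro!: sum.cong)
    qed
    also have "\<dots> = F * Q" by (simp add: card_Perms F_def)
    finally show ?thesis .
  qed
  have diag: "S c c = F * Q / d" for c
  proof -
    have "(\<Sum>j\<in>UNIV. S j j) = (\<Sum>j\<in>(UNIV::'d set). S c c)"
      by (rule sum.cong[OF refl]) (rule diag_const)
    then have "d * S c c = F * Q" using diag_sum by (simp add: d_def)
    then show ?thesis using d2' by (simp add: field_simps)
  qed
  have row: "(\<Sum>e\<in>UNIV. S c e) = 0" for c
  proof -
    have "(\<Sum>e\<in>UNIV. S c e) = (\<Sum>\<pi>\<in>Perms. y (\<pi> c) * (\<Sum>e\<in>UNIV. y (\<pi> e)))"
      unfolding S_def by (subst sum.swap) (simp add: sum_distrib_left)
    also have "\<dots> = 0"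
    proof (rule sum.neutral, rule ballI)
      fix \<pi> :: "'d \<Rightarrow> 'd" assume "\<pi> \<in> Perms"
      then have "\<pi> permutes UNIV" by simp
      then have "(\<Sum>e\<in>UNIV. y (\<pi> e)) = 0"
        using sum.permute[of \<pi> UNIV y] y0 by (simp add: o_def)
      then show "y (\<pi> c) * (\<Sum>e\<in>UNIV. y (\<pi> e)) = 0" by simp
    qed
    finally show ?thesis .
  qed
  have off: "S c e = - F * Q / (d * (d - 1))" if ce: "c \<noteq> e" for c e
  proof -
    have off_const: "S c e' = S c e" if "e' \<noteq> c" for e'
    proof -
      have "S c e' = S (Transposition.transpose e' e c) (Transposition.transpose e' e e')"
        by (rule invar[symmetric]) (simp add: permutes_swap_id)
      also have "Transposition.transpose e' e c = c" using ce that by (simp add: Transposition.transpose_def)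
      finally show ?thesis by simp
    qed
    have "0 = (\<Sum>e'\<in>UNIV. S c e')" using row by simp
    also have "\<dots> = S c c + (\<Sum>e'\<in>UNIV - {c}. S c e')"
      by (simp add: sum.remove[of UNIV c])
    also have "\<dots> = S c c + (\<Sum>e'\<in>UNIV - {c}. S c e)"
      by (simp add: off_const)
    also have "\<dots> = S c c + (d - 1) * S c e"
      using d2' by (simp add: d_def card_Diff_subset of_nat_diff)
    finally have "(d - 1) * S c e = - S c c" by linarith
    then show ?thesis using d2' by (simp add: diag field_simps)
  qed
  show ?thesis
    using diag off unfolding S_def[symmetric] Q_def[symmetric] d_def[symmetric] F_def[symmetric]
    by (cases "c = e") (simp_all add: field_simps)
qed

context
  fixes H :: "real^'k^'d"
  assumes vH: "valid_H H"
begin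

lemma HtH_entry: "(\<Sum>c\<in>UNIV. H$c$a * H$c$b) = (if a = b then 1 else 0)"
proof -
  have "(\<Sum>c\<in>UNIV. H$c$a * H$c$b) = (transpose H ** H) $ a $ b"
    by (simp add: matrix_matrix_mult_def transpose_def)
  then show ?thesis by (simp add: HtH[OF vH] mat_def)
qed

lemma P_component:
  assumes "\<pi> permutes (UNIV::'d set)"
  shows "(P_perm H \<pi> *v x) $ a = (\<Sum>c\<in>UNIV. H$c$a * (H *v x) $ (inv \<pi> c))"
proof -
  have "P_perm H \<pi> *v x = transpose H *v (H *v (P_perm H \<pi> *v x))"
    by (simp only: HtHv[OF vH])
  also have "\<dots> = transpose H *v (\<chi> i. (H *v x) $ (inv \<pi> i))"
    by (simp add: HP[OF vH assms])
  finally show ?thesis by (simp add: matrix_vector_mult_def transpose_def)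
qed

lemma PW_Sigma:
  assumes d2: "CARD('d) \<ge> 2"
  shows "(\<Sum>\<pi>\<in>Perms. (P_perm H \<pi> *v x) $ a * (P_perm H \<pi> *v x) $ b) =
    real (fact CARD('d)) * (if a = b then (norm x)^2 / (real CARD('d) - 1) else 0)"
proof -
  define y where "y j = (H *v x) $ j" for j
  define Q where "Q = (\<Sum>j\<in>UNIV. (y j)^2)"
  define d where "d = real CARD('d)"
  define F where "F = real (fact CARD('d) :: nat)"
  define A where "A = Q / d"
  define B where "B = - Q / (d * (d - 1))"
  have d2': "d \<ge> 2" using d2 unfolding d_def by simp
  have y0: "sum y UNIV = 0" unfolding y_def using Hv_sum[OF vH] by simp
  have Qn: "Q = (norm x)^2"
  proof -
    have "(norm x)^2 = (norm (H *v x))^2" by (simp add: norm_H[OF vH])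
    also have "\<dots> = Q" by (simp add: Q_def y_def norm_vec_def L2_set_def sum_nonneg)
    finally show ?thesis by simp
  qed
  have "(\<Sum>\<pi>\<in>Perms. (P_perm H \<pi> *v x) $ a * (P_perm H \<pi> *v x) $ b)
      = (\<Sum>\<pi>\<in>Perms. \<Sum>c\<in>UNIV. \<Sum>e\<in>UNIV. H$c$a * H$e$b * (y (inv \<pi> c) * y (inv \<pi> e)))"
    by (rule sum.cong) (simp_all add: P_component y_def sum_product mult_ac)
  also have "\<dots> = (\<Sum>c\<in>UNIV. \<Sum>e\<in>UNIV. H$c$a * H$e$b * (\<Sum>\<pi>\<in>Perms. y (inv \<pi> c) * y (inv \<pi> e)))"
    by (simp add: sum_distrib_left sum.swap[of _ Perms])
  also have "\<dots> = (\<Sum>c\<in>UNIV. \<Sum>e\<in>UNIV. H$c$a * H$e$b * (F * (B + (if c = e then A - B else 0))))"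
  proof -
    have "(\<Sum>\<pi>\<in>Perms. y (inv \<pi> c) * y (inv \<pi> e)) = F * (B + (if c = e then A - B else 0))" for c e
    proof -
      have "(\<Sum>\<pi>\<in>Perms. y (inv \<pi> c) * y (inv \<pi> e)) = (\<Sum>\<pi>\<in>Perms. y (\<pi> c) * y (\<pi> e))"
        by (rule sum_permutations_inverse[symmetric])
      also have "\<dots> = F * (B + (if c = e then A - B else 0))"
        unfolding perm_sum2[OF y0 d2] by (simp add: F_def A_def B_def Q_def d_def)
      finally show ?thesis .
    qed
    then show ?thesis by simp
  qed
  also have "\<dots> = F * B * ((\<Sum>c\<in>UNIV. H$c$a) * (\<Sum>e\<in>UNIV. H$e$b))
        + F * (A - B) * (\<Sum>c\<in>UNIV. H$c$a * H$c$b)"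
  proof -
    have pt: "H$c$a * H$e$b * (F * (B + (if c = e then A - B else 0))) =
      F * B * (H$c$a * H$e$b) + (if c = e then F * (A - B) * (H$c$a * H$c$b) else 0)" for c e
      by (auto simp: algebra_simps)
    have "(\<Sum>c\<in>UNIV. \<Sum>e\<in>UNIV. H$c$a * H$e$b * (F * (B + (if c = e then A - B else 0))))
      = (\<Sum>c\<in>UNIV. \<Sum>e\<in>UNIV. F * B * (H$c$a * H$e$b)) +
        (\<Sum>c\<in>UNIV. \<Sum>e\<in>UNIV. (if c = e then F * (A - B) * (H$c$a * H$c$b) else 0))"
      by (simp only: pt sum.distrib)
    also have "(\<Sum>c\<in>UNIV. \<Sum>e\<in>UNIV. (if c = e then F * (A - B) * (H$c$a * H$c$b) else 0))
       = F * (A - B) * (\<Sum>c\<in>UNIV. H$c$a * H$c$b)"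
      by (simp add: sum_distrib_left)
    also have "(\<Sum>c\<in>UNIV. \<Sum>e\<in>UNIV. F * B * (H$c$a * H$e$b)) =
       F * B * (\<Sum>c\<in>UNIV. \<Sum>e\<in>UNIV. H$c$a * H$e$b)"
      by (simp add: sum_distrib_left)
    also have "(\<Sum>c\<in>UNIV. \<Sum>e\<in>UNIV. H$c$a * H$e$b) = (\<Sum>c\<in>UNIV. H$c$a) * (\<Sum>e\<in>UNIV. H$e$b)"
      by (rule sum_product[symmetric])
    finally show ?thesis .
  qed
  also have "\<dots> = F * (A - B) * (if a = b then 1 else 0)"
    by (simp add: H_col_sum[OF vH] HtH_entry)
  also have "A - B = Q / (d - 1)"
    using d2' by (simp add: A_def B_def field_simps)
  finally show ?thesis by (simp add: F_def Qn d_def)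
qed

lemma PW_gamma:
  shows "(\<Sum>\<pi>\<in>Perms. gamma H i \<bullet> (P_perm H \<pi> *v x)) = 0"
proof -
  have "(\<Sum>\<pi>\<in>Perms. gamma H i \<bullet> (P_perm H \<pi> *v x)) = (\<Sum>\<pi>\<in>Perms. (H *v x) $ (inv \<pi> i))"
  proof (rule sum.cong)
    fix \<pi> :: "'d \<Rightarrow> 'd" assume "\<pi> \<in> Perms"
    then have p: "\<pi> permutes UNIV" by simp
    show "gamma H i \<bullet> (P_perm H \<pi> *v x) = (H *v x) $ (inv \<pi> i)"
      by (simp only: gamma_P[OF vH p] gamma_inner[OF vH] HP[OF vH p] vec_lambda_beta)
  qed simp
  also have "\<dots> = (\<Sum>\<pi>\<in>Perms. (H *v x) $ (\<pi> i))"
    by (rule sum_permutations_inverse[symmetric])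
  also have "\<dots> = 0" by (rule perm_sum1) (use Hv_sum[OF vH] in simp)
  finally show ?thesis .
qed

end

definition Nmeas :: "real^'k^'d \<Rightarrow> (real^'k) measure \<Rightarrow> (real^'k) measure" where
  "Nmeas H \<rho> = distr (count_space Perms \<Otimes>\<^sub>M \<rho>) borel (\<lambda>(\<pi>, x). P_perm H \<pi> *v x)"

abbreviation Fd :: "'d::finite itself \<Rightarrow> real" where
  "Fd _ \<equiv> real (fact CARD('d))"

lemma meas_P: "(\<lambda>x. (A::real^'n^'m) *v x) \<in> borel_measurable borel"
  by (rule borel_measurable_continuous_onI) (rule matrix_vector_mult_linear_continuous_on)

lemma meas_borel_cong:
  assumes "sets \<rho> = sets borel" "f \<in> borel_measurable borel"
  shows "f \<in> borel_measurable \<rho>"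
  using assms(2) measurable_cong_sets[OF assms(1) refl] by blast

lemma meas_g:
  fixes H :: "real^'k^'d"
  assumes "sets \<rho> = sets borel"
  shows "(\<lambda>(\<pi>, x). P_perm H \<pi> *v x) \<in> count_space Perms \<Otimes>\<^sub>M \<rho> \<rightarrow>\<^sub>M borel"
proof (rule measurable_pair_measure_countable1)
  show "countable (Perms :: ('d \<Rightarrow> 'd) set)" by (rule countable_finite[OF finite_Perms])
  fix \<pi> :: "'d \<Rightarrow> 'd"
  show "(\<lambda>x. case (\<pi>, x) of (\<pi>, x) \<Rightarrow> P_perm H \<pi> *v x) \<in> borel_measurable \<rho>"
    using meas_borel_cong[OF assms meas_P] by simp
qed

lemma pair_sf:
  assumes "prob_space \<rho>"
  shows "pair_sigma_finite (count_space (Perms :: ('d::finite \<Rightarrow> 'd) set)) \<rho>"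
  by (intro pair_sigma_finite.intro sigma_finite_measure_count_space_finite finite_Perms
      prob_space_imp_sigma_finite assms)

lemma sets_Nmeas: "sets (Nmeas H \<rho>) = sets borel"
  by (simp add: Nmeas_def)

lemma emeasure_Nmeas:
  fixes H :: "real^'k^'d"
  assumes s: "sets \<rho> = sets borel" and p: "prob_space \<rho>" and A: "A \<in> sets borel"
  shows "emeasure (Nmeas H \<rho>) A = (\<Sum>\<pi>\<in>Perms. emeasure \<rho> ((\<lambda>x. P_perm H \<pi> *v x) -` A \<inter> space \<rho>))"
proof -
  let ?g = "\<lambda>(\<pi>, x). P_perm H \<pi> *v x"
  let ?M = "count_space (Perms :: ('d \<Rightarrow> 'd) set) \<Otimes>\<^sub>M \<rho>"
  have X: "?g -` A \<inter> space ?M \<in> sets ?M" using meas_g[OF s] A by (rule measurable_sets)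
  have "emeasure (Nmeas H \<rho>) A = emeasure ?M (?g -` A \<inter> space ?M)"
    unfolding Nmeas_def using meas_g[where H=H, OF s] A by (simp add: emeasure_distr)
  also have "\<dots> = \<integral>\<^sup>+ \<pi>. emeasure \<rho> (Pair \<pi> -` (?g -` A \<inter> space ?M)) \<partial>count_space Perms"
    by (rule sigma_finite_measure.emeasure_pair_measure_alt[OF prob_space_imp_sigma_finite[OF p] X])
  also have "\<dots> = (\<Sum>\<pi>\<in>Perms. emeasure \<rho> (Pair \<pi> -` (?g -` A \<inter> space ?M)))"
    by (rule nn_integral_count_space_finite[OF finite_Perms])
  also have "\<dots> = (\<Sum>\<pi>\<in>Perms. emeasure \<rho> ((\<lambda>x. P_perm H \<pi> *v x) -` A \<inter> space \<rho>))"
  proof (rule sum.cong[OF refl])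
    fix \<pi> :: "'d \<Rightarrow> 'd" assume "\<pi> \<in> Perms"
    then have "Pair \<pi> -` (?g -` A \<inter> space ?M) = (\<lambda>x. P_perm H \<pi> *v x) -` A \<inter> space \<rho>"
      by (auto simp: space_pair_measure)
    then show "emeasure \<rho> (Pair \<pi> -` (?g -` A \<inter> space ?M)) =
        emeasure \<rho> ((\<lambda>x. P_perm H \<pi> *v x) -` A \<inter> space \<rho>)" by simp
  qed
  finally show ?thesis .
qed

lemma sym_law_eq:
  fixes H :: "real^'k^'d"
  assumes s: "sets \<rho> = sets borel" and p: "prob_space \<rho>"
  shows "sym_law H \<rho> = density (Nmeas H \<rho>) (\<lambda>_. ennreal (1 / Fd TYPE('d)))"
proof -
  let ?S = "density (Nmeas H \<rho>) (\<lambda>_. ennreal (1 / Fd TYPE('d)))"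
  have sS: "sets ?S = sets borel" by (simp add: sets_Nmeas)
  have spS: "space ?S = UNIV" by (simp add: Nmeas_def)
  have eq: "(\<Sum>\<pi>\<in>Perms. emeasure (distr \<rho> borel (\<lambda>x. P_perm H \<pi> *v x)) A) / of_nat (fact CARD('d))
      = emeasure ?S A" if A: "A \<in> sets borel" for A
  proof -
    have "emeasure ?S A = ennreal (1 / Fd TYPE('d)) * emeasure (Nmeas H \<rho>) A"
      using A by (simp add: emeasure_density_const sets_Nmeas)
    also have "emeasure (Nmeas H \<rho>) A = (\<Sum>\<pi>\<in>Perms. emeasure (distr \<rho> borel (\<lambda>x. P_perm H \<pi> *v x)) A)"
      unfolding emeasure_Nmeas[OF s p A]
      by (rule sum.cong[OF refl]) (simp add: emeasure_distr meas_borel_cong[OF s meas_P] A)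
    finally have "emeasure ?S A = ennreal (1 / Fd TYPE('d)) *
       (\<Sum>\<pi>\<in>Perms. emeasure (distr \<rho> borel (\<lambda>x. P_perm H \<pi> *v x)) A)" .
    moreover have "ennreal (1 / Fd TYPE('d)) * X = X / of_nat (fact CARD('d))" for X
    proof -
      have "ennreal (1 / Fd TYPE('d)) = 1 / of_nat (fact CARD('d))"
        by (metis divide_ennreal ennreal_1 ennreal_of_nat_eq_real_of_nat fact_gt_zero
            of_nat_0_less_iff zero_less_one_class.zero_le_one)
      then show ?thesis by (simp add: divide_ennreal_def mult.commute)
    qed
    ultimately show ?thesis by simp
  qed
  have "sym_law H \<rho> = measure_of UNIV (sets borel) (emeasure ?S)"
    unfolding sym_law_def
  proof (rule measure_of_eq)
    show "sets borel \<subseteq> Pow UNIV" by simp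
    fix a :: "(real^'k) set" assume "a \<in> sigma_sets UNIV (sets borel)"
    then have "a \<in> sets borel" by (metis sets.sigma_sets_eq space_borel)
    then show "(\<Sum>\<pi>\<in>Perms. emeasure (distr \<rho> borel (\<lambda>x. P_perm H \<pi> *v x)) a) / of_nat (fact CARD('d))
      = emeasure ?S a" by (rule eq)
  qed
  also have "\<dots> = measure_of (space ?S) (sets ?S) (emeasure ?S)"
    by (simp only: sS spS)
  also have "\<dots> = ?S" by (rule measure_of_of_measure)
  finally show ?thesis .
qed


lemma sym_nn_integral:
  fixes H :: "real^'k^'d"
  assumes s: "sets \<rho> = sets borel" and p: "prob_space \<rho>" and f: "f \<in> borel_measurable borel"
  shows "(\<integral>\<^sup>+x. f x \<partial>sym_law H \<rho>) =
    ennreal (1 / Fd TYPE('d)) * (\<Sum>\<pi>\<in>Perms. \<integral>\<^sup>+x. f (P_perm H \<pi> *v x) \<partial>\<rho>)"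
proof -
  let ?g = "\<lambda>(\<pi>, x). P_perm H \<pi> *v x"
  let ?M = "count_space (Perms :: ('d \<Rightarrow> 'd) set) \<Otimes>\<^sub>M \<rho>"
  have fN: "f \<in> borel_measurable (Nmeas H \<rho>)" by (rule meas_borel_cong[OF sets_Nmeas f])
  have "(\<integral>\<^sup>+x. f x \<partial>sym_law H \<rho>) = \<integral>\<^sup>+x. ennreal (1 / Fd TYPE('d)) * f x \<partial>Nmeas H \<rho>"
    unfolding sym_law_eq[OF s p] by (rule nn_integral_density) (simp_all add: fN)
  also have "\<dots> = ennreal (1 / Fd TYPE('d)) * \<integral>\<^sup>+x. f x \<partial>Nmeas H \<rho>"
    by (rule nn_integral_cmult[OF fN])
  also have "(\<integral>\<^sup>+x. f x \<partial>Nmeas H \<rho>) = \<integral>\<^sup>+z. f (?g z) \<partial>?M"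
    unfolding Nmeas_def
    by (rule nn_integral_distr[OF meas_g[OF s]]) (rule meas_borel_cong[OF _ f], simp)
  also have "\<dots> = \<integral>\<^sup>+\<pi>. \<integral>\<^sup>+x. f (?g (\<pi>, x)) \<partial>\<rho> \<partial>count_space Perms"
    by (rule sigma_finite_measure.nn_integral_fst[symmetric, OF prob_space_imp_sigma_finite[OF p]])
       (rule measurable_compose[OF meas_g[OF s] f])
  also have "\<dots> = (\<Sum>\<pi>\<in>Perms. \<integral>\<^sup>+x. f (P_perm H \<pi> *v x) \<partial>\<rho>)"
    by (simp add: nn_integral_count_space_finite[OF finite_Perms])
  finally show ?thesis .
qed

lemma sym_integral:
  fixes H :: "real^'k^'d" and f :: "real^'k \<Rightarrow> 'b::{banach, second_countable_topology}"
  assumes s: "sets \<rho> = sets borel" and p: "prob_space \<rho>" and f: "f \<in> borel_measurable borel"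
    and int: "\<And>\<pi>. \<pi> \<in> Perms \<Longrightarrow> integrable \<rho> (\<lambda>x. f (P_perm H \<pi> *v x))"
  shows "integrable (sym_law H \<rho>) f"
    and "integral\<^sup>L (sym_law H \<rho>) f =
      (1 / Fd TYPE('d)) *\<^sub>R (\<Sum>\<pi>\<in>Perms. \<integral>x. f (P_perm H \<pi> *v x) \<partial>\<rho>)"
proof -
  let ?g = "\<lambda>(\<pi>, x). P_perm H \<pi> *v x"
  let ?M = "count_space (Perms :: ('d \<Rightarrow> 'd) set) \<Otimes>\<^sub>M \<rho>"
  have fg: "(\<lambda>z. f (?g z)) \<in> borel_measurable ?M" by (rule measurable_compose[OF meas_g[OF s] f])
  have nf: "(\<lambda>z. ennreal (norm (f (?g z)))) \<in> borel_measurable ?M" using fg by measurable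
  have "(\<integral>\<^sup>+z. ennreal (norm (f (?g z))) \<partial>?M) =
      \<integral>\<^sup>+\<pi>. \<integral>\<^sup>+x. ennreal (norm (f (?g (\<pi>, x)))) \<partial>\<rho> \<partial>count_space Perms"
    by (rule sigma_finite_measure.nn_integral_fst[symmetric, OF prob_space_imp_sigma_finite[OF p] nf])
  also have "\<dots> = (\<Sum>\<pi>\<in>Perms. \<integral>\<^sup>+x. ennreal (norm (f (P_perm H \<pi> *v x))) \<partial>\<rho>)"
    by (simp add: nn_integral_count_space_finite[OF finite_Perms])
  also have "\<dots> < \<infinity>"
    using int by (simp add: ennreal_sum_less_top finite_Perms integrable_iff_bounded)
  finally have intM: "integrable ?M (\<lambda>z. f (?g z))"
    using fg by (simp add: integrable_iff_bounded)
  have fN: "f \<in> borel_measurable (Nmeas H \<rho>)" by (rule meas_borel_cong[OF sets_Nmeas f])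
  have intN: "integrable (Nmeas H \<rho>) f"
    unfolding Nmeas_def by (subst integrable_distr_eq[OF meas_g[OF s] f]) (rule intM)
  have c0: "0 \<le> 1 / Fd TYPE('d)" by simp
  show "integrable (sym_law H \<rho>) f"
    unfolding sym_law_eq[OF s p]
    by (subst integrable_density) (simp_all add: fN intN)
  have "integral\<^sup>L (sym_law H \<rho>) f = \<integral>x. (1 / Fd TYPE('d)) *\<^sub>R f x \<partial>Nmeas H \<rho>"
    unfolding sym_law_eq[OF s p] by (rule integral_density) (simp_all add: fN)
  also have "\<dots> = (1 / Fd TYPE('d)) *\<^sub>R integral\<^sup>L (Nmeas H \<rho>) f" by simp
  also have "integral\<^sup>L (Nmeas H \<rho>) f = \<integral>z. f (?g z) \<partial>?M"
    unfolding Nmeas_def by (rule integral_distr[OF meas_g[OF s] f])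
  also have "\<dots> = \<integral>\<pi>. \<integral>x. f (?g (\<pi>, x)) \<partial>\<rho> \<partial>count_space Perms"
    by (rule pair_sigma_finite.integral_fst'[symmetric, OF pair_sf[OF p] intM])
  also have "\<dots> = (\<Sum>\<pi>\<in>Perms. \<integral>x. f (P_perm H \<pi> *v x) \<partial>\<rho>)"
    by (simp add: lebesgue_integral_count_space_finite[OF finite_Perms])
  finally show "integral\<^sup>L (sym_law H \<rho>) f =
      (1 / Fd TYPE('d)) *\<^sub>R (\<Sum>\<pi>\<in>Perms. \<integral>x. f (P_perm H \<pi> *v x) \<partial>\<rho>)" .
qed

definition okay :: "real^'k^'d \<Rightarrow> (real^'k) measure \<Rightarrow> bool" where
  "okay H \<mu> \<longleftrightarrow> prob_space \<mu> \<and> sets \<mu> = sets borel \<and> (AE x in \<mu>. x \<in> Xd H)"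

definition good :: "real^'k^'d \<Rightarrow> (real^'k) measure \<Rightarrow> bool" where
  "good H \<mu> \<longleftrightarrow> okay H \<mu> \<and> integral\<^sup>L \<mu> (\<lambda>x. x) = 0"

context
  fixes H :: "real^'k^'d"
  assumes vH: "valid_H H"
begin

lemma anchored_good: "anchored H \<rho> \<Longrightarrow> good H \<rho>"
proof -
  assume a: "anchored H \<rho>"
  then have p: "prob_space \<rho>" and s: "sets \<rho> = sets borel" and e: "emeasure \<rho> (Xd H) = 1"
    and m: "integral\<^sup>L \<rho> (\<lambda>x. x) = 0" unfolding anchored_def by auto
  have X: "Xd H \<in> sets \<rho>" using s Xd_borel[OF vH] by simp
  have "AE x in \<rho>. x \<in> Xd H"
    using prob_space.AE_in_set_eq_1[OF p X] e by (simp add: measure_def)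
  then show ?thesis using p s m unfolding good_def okay_def by auto
qed

lemma okay_integrable:
  fixes f :: "real^'k \<Rightarrow> 'b::{banach, second_countable_topology}"
  assumes ok: "okay H \<mu>" and f: "f \<in> borel_measurable borel"
    and B: "\<And>x. x \<in> Xd H \<Longrightarrow> norm (f x) \<le> B"
  shows "integrable \<mu> f"
proof -
  have p: "prob_space \<mu>" and s: "sets \<mu> = sets borel" and ae: "AE x in \<mu>. x \<in> Xd H"
    using ok unfolding okay_def by auto
  interpret prob_space \<mu> by (rule p)
  show ?thesis
  proof (rule finite_measure.integrable_const_bound[OF finite_measure_axioms])
    show "AE x in \<mu>. norm (f x) \<le> B" using ae by eventually_elim (rule B)
    show "f \<in> borel_measurable \<mu>" by (rule meas_borel_cong[OF s f])
  qed
qed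

lemma Xd_compact: "compact (Xd H)"
proof -
  have "bounded (Xd H)" unfolding bounded_iff using Xd_bound[OF vH] by blast
  then show ?thesis using Xd_closed[OF vH] by (simp add: compact_eq_bounded_closed)
qed

lemma cont_bound:
  fixes f :: "real^'k \<Rightarrow> 'b::real_normed_vector"
  assumes "continuous_on UNIV f"
  obtains B where "\<And>x. x \<in> Xd H \<Longrightarrow> norm (f x) \<le> B"
proof -
  have "compact (f ` Xd H)"
    by (rule compact_continuous_image[OF continuous_on_subset[OF assms] Xd_compact]) simp
  then have "bounded (f ` Xd H)" by (rule compact_imp_bounded)
  then obtain B where "\<forall>y\<in>f ` Xd H. norm y \<le> B" unfolding bounded_iff by blast
  then show ?thesis using that by blast
qed

lemma okay_cont_integrable:
  fixes f :: "real^'k \<Rightarrow> 'b::{banach, second_countable_topology}"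
  assumes ok: "okay H \<mu>" and c: "continuous_on UNIV f"
  shows "integrable \<mu> f"
proof -
  obtain B where "\<And>x. x \<in> Xd H \<Longrightarrow> norm (f x) \<le> B" using cont_bound[OF c] by blast
  then show ?thesis
    by (rule okay_integrable[OF ok borel_measurable_continuous_onI[OF c]])
qed

lemma sym_integral_cont:
  fixes f :: "real^'k \<Rightarrow> 'b::{banach, second_countable_topology}"
  assumes ok: "okay H \<rho>" and c: "continuous_on UNIV f"
  shows "integrable (sym_law H \<rho>) f"
    and "integral\<^sup>L (sym_law H \<rho>) f =
      (1 / Fd TYPE('d)) *\<^sub>R (\<Sum>\<pi>\<in>Perms. \<integral>x. f (P_perm H \<pi> *v x) \<partial>\<rho>)"
proof -
  have p: "prob_space \<rho>" and s: "sets \<rho> = sets borel" using ok unfolding okay_def by auto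
  have f: "f \<in> borel_measurable borel" by (rule borel_measurable_continuous_onI[OF c])
  have int: "integrable \<rho> (\<lambda>x. f (P_perm H \<pi> *v x))" for \<pi>
    by (rule okay_cont_integrable[OF ok])
       (rule continuous_on_compose2[OF c matrix_vector_mult_linear_continuous_on], auto)
  show "integrable (sym_law H \<rho>) f" by (rule sym_integral(1)[OF s p f int])
  show "integral\<^sup>L (sym_law H \<rho>) f =
      (1 / Fd TYPE('d)) *\<^sub>R (\<Sum>\<pi>\<in>Perms. \<integral>x. f (P_perm H \<pi> *v x) \<partial>\<rho>)"
    by (rule sym_integral(2)[OF s p f int])
qed

lemma sets_sym: "sets \<rho> = sets borel \<Longrightarrow> prob_space \<rho> \<Longrightarrow> sets (sym_law H \<rho>) = sets borel"
  by (simp add: sym_law_eq sets_Nmeas)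

lemma sym_good:
  assumes g: "good H \<rho>"
  shows "good H (sym_law H \<rho>)"
proof -
  have ok: "okay H \<rho>" and m: "integral\<^sup>L \<rho> (\<lambda>x. x) = 0" using g unfolding good_def by auto
  have p: "prob_space \<rho>" and s: "sets \<rho> = sets borel" and ae: "AE x in \<rho>. x \<in> Xd H"
    using ok unfolding okay_def by auto
  have ss: "sets (sym_law H \<rho>) = sets borel" by (rule sets_sym[OF s p])
  have sp: "space (sym_law H \<rho>) = UNIV" using sets_eq_imp_space_eq[OF ss] by simp
  have F0: "Fd TYPE('d) > 0" by simp
  have ps: "prob_space (sym_law H \<rho>)"
  proof (rule prob_spaceI)
    have "emeasure (sym_law H \<rho>) (space (sym_law H \<rho>)) = \<integral>\<^sup>+x. 1 \<partial>sym_law H \<rho>"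
      by simp
    also have "\<dots> = ennreal (1 / Fd TYPE('d)) * (\<Sum>\<pi>\<in>(Perms::('d\<Rightarrow>'d) set). \<integral>\<^sup>+x. 1 \<partial>\<rho>)"
      using sym_nn_integral[OF s p, where H=H and f="\<lambda>_. 1"] by simp
    also have "\<dots> = ennreal (1 / Fd TYPE('d)) * of_nat (card (Perms :: ('d\<Rightarrow>'d) set))"
      using prob_space.emeasure_space_1[OF p] by simp
    also have "\<dots> = 1"
      using F0 by (simp add: card_Perms ennreal_of_nat_eq_real_of_nat ennreal_mult''[symmetric])
    finally show "emeasure (sym_law H \<rho>) (space (sym_law H \<rho>)) = 1" .
  qed
  have aes: "AE x in sym_law H \<rho>. x \<in> Xd H"
  proof -
    have nX: "- Xd H \<in> sets borel" using Xd_borel[OF vH] by auto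
    have "emeasure (sym_law H \<rho>) (- Xd H) = \<integral>\<^sup>+x. indicator (- Xd H) x \<partial>sym_law H \<rho>"
      using nX ss by simp
    also have "\<dots> = ennreal (1 / Fd TYPE('d)) *
        (\<Sum>\<pi>\<in>Perms. \<integral>\<^sup>+x. indicator (- Xd H) (P_perm H \<pi> *v x) \<partial>\<rho>)"
      by (rule sym_nn_integral[OF s p]) (rule borel_measurable_indicator[OF nX])
    also have "\<dots> = 0"
    proof -
      have "(\<integral>\<^sup>+x. indicator (- Xd H) (P_perm H \<pi> *v x) \<partial>\<rho>) = 0" if "\<pi> \<in> Perms" for \<pi>
      proof -
        have pi: "\<pi> permutes UNIV" using that by simp
        have "AE x in \<rho>. (indicator (- Xd H) (P_perm H \<pi> *v x) :: ennreal) = 0"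
          using ae by eventually_elim (simp add: P_Xd[OF vH pi])
        then have "(\<integral>\<^sup>+x. indicator (- Xd H) (P_perm H \<pi> *v x) \<partial>\<rho>) = (\<integral>\<^sup>+x. 0 \<partial>\<rho>)"
          by (rule nn_integral_cong_AE)
        then show ?thesis by simp
      qed
      then show ?thesis by simp
    qed
    finally have e0: "emeasure (sym_law H \<rho>) (- Xd H) = 0" .
    show ?thesis
    proof (subst AE_iff_measurable[OF _ refl])
      have eqs: "{x \<in> space (sym_law H \<rho>). x \<notin> Xd H} = - Xd H" using sp by auto
      show "{x \<in> space (sym_law H \<rho>). x \<notin> Xd H} \<in> sets (sym_law H \<rho>)"
        using nX ss eqs by simp
      show "emeasure (sym_law H \<rho>) {x \<in> space (sym_law H \<rho>). x \<notin> Xd H} = 0"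
        using e0 eqs by simp
    qed
  qed
  have mean: "integral\<^sup>L (sym_law H \<rho>) (\<lambda>x. x) = 0"
  proof -
    have "integral\<^sup>L (sym_law H \<rho>) (\<lambda>x. x) =
      (1 / Fd TYPE('d)) *\<^sub>R (\<Sum>\<pi>\<in>Perms. \<integral>x. P_perm H \<pi> *v x \<partial>\<rho>)"
      by (rule sym_integral_cont(2)[OF ok]) (rule continuous_on_id)
    also have "\<dots> = 0"
    proof -
      have ix: "integrable \<rho> (\<lambda>x. x)" by (rule okay_cont_integrable[OF ok continuous_on_id])
      have "(\<integral>x. P_perm H \<pi> *v x \<partial>\<rho>) = 0" for \<pi>
        using integral_bounded_linear[OF matrix_vector_mul_bounded_linear ix, of "P_perm H \<pi>"] m
        by simp
      then show ?thesis by simp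
    qed
    finally show ?thesis .
  qed
  show ?thesis unfolding good_def okay_def using ps ss aes mean by auto
qed

end

lemma chi_meas: "chi_integrand H i j \<in> borel_measurable borel"
  unfolding chi_integrand_def by measurable

lemma ennreal_Fd_inv: "ennreal (1 / Fd TYPE('d::finite)) * of_nat (fact CARD('d)) = 1"
proof -
  have F0: "Fd TYPE('d) > 0" by simp
  then show ?thesis by (simp add: ennreal_of_nat_eq_real_of_nat ennreal_mult''[symmetric])
qed

lemma exists_pair: "CARD('d::finite) \<ge> 2 \<Longrightarrow> \<exists>i j :: 'd. i \<noteq> j"
proof -
  assume d: "CARD('d) \<ge> 2"
  obtain i :: 'd where True by blast
  have c: "card (UNIV - {i}) = CARD('d) - 1" by (rule card_Diff_singleton) simp
  have "UNIV - {i} \<noteq> {}"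
  proof
    assume "UNIV - {i} = {}"
    then have "card (UNIV - {i}) = 0" by (metis card.empty)
    with c d show False by linarith
  qed
  then show ?thesis by blast
qed

lemma chi_le_star:
  fixes H :: "real^'k^'d"
  assumes "i \<noteq> j"
  shows "(\<integral>\<^sup>+x. chi_integrand H i j x \<partial>\<mu>) \<le> chi_star H \<mu>"
  unfolding chi_star_def
  by (rule Max_ge) (use assms in auto)

context
  fixes H :: "real^'k^'d"
  assumes vH: "valid_H H"
begin

lemma chi_P:
  assumes "\<pi> permutes (UNIV::'d set)"
  shows "chi_integrand H i j (P_perm H \<pi> *v x) = chi_integrand H (inv \<pi> i) (inv \<pi> j) x"
  unfolding chi_integrand_def by (simp add: inner_diff_left gamma_P[OF vH assms])

theorem part_i:
  assumes d2: "CARD('d) \<ge> 2" and g: "good H \<rho>"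
  shows "chi_star H (sym_law H \<rho>) \<le> chi_star H \<rho>"
proof -
  have p: "prob_space \<rho>" and s: "sets \<rho> = sets borel" using g unfolding good_def okay_def by auto
  have bound: "(\<integral>\<^sup>+x. chi_integrand H i j x \<partial>sym_law H \<rho>) \<le> chi_star H \<rho>" if ij: "i \<noteq> j" for i j
  proof -
    have "(\<integral>\<^sup>+x. chi_integrand H i j x \<partial>sym_law H \<rho>) =
      ennreal (1 / Fd TYPE('d)) * (\<Sum>\<pi>\<in>Perms. \<integral>\<^sup>+x. chi_integrand H i j (P_perm H \<pi> *v x) \<partial>\<rho>)"
      by (rule sym_nn_integral[OF s p chi_meas])
    also have "\<dots> \<le> ennreal (1 / Fd TYPE('d)) * (\<Sum>\<pi>\<in>(Perms::('d\<Rightarrow>'d) set). chi_star H \<rho>)"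
    proof (intro mult_left_mono sum_mono)
      fix \<pi> :: "'d \<Rightarrow> 'd" assume "\<pi> \<in> Perms"
      then have pi: "\<pi> permutes UNIV" by simp
      have "inv \<pi> i \<noteq> inv \<pi> j" using ij permutes_inv_eq[OF pi] by metis
      then show "(\<integral>\<^sup>+x. chi_integrand H i j (P_perm H \<pi> *v x) \<partial>\<rho>) \<le> chi_star H \<rho>"
        by (simp add: chi_P[OF pi] chi_le_star)
    qed simp
    also have "\<dots> = (ennreal (1 / Fd TYPE('d)) * of_nat (fact CARD('d))) * chi_star H \<rho>"
      by (simp add: card_Perms mult.assoc)
    also have "\<dots> = chi_star H \<rho>" by (simp only: ennreal_Fd_inv mult_1)
    finally show ?thesis .
  qed
  obtain i0 j0 :: 'd where "i0 \<noteq> j0" using exists_pair[OF d2] by blast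
  then show ?thesis
    unfolding chi_star_def[of H "sym_law H \<rho>"]
    by (intro Max.boundedI) (auto intro: bound)
qed

theorem part_iii:
  assumes d2: "CARD('d) \<ge> 2" and g: "good H \<rho>"
  shows "Sigma_mat (sym_law H \<rho>) = (trace (Sigma_mat \<rho>) / real (CARD('d) - 1)) *\<^sub>R mat 1"
proof -
  have ok: "okay H \<rho>" using g unfolding good_def by auto
  have F0: "Fd TYPE('d) > 0" by simp
  have tr: "trace (Sigma_mat \<rho>) = (\<integral>x. (norm x)^2 \<partial>\<rho>)"
  proof -
    have "trace (Sigma_mat \<rho>) = (\<Sum>a\<in>UNIV. \<integral>x. x $ a * x $ a \<partial>\<rho>)"
      by (simp add: trace_def Sigma_mat_def)
    also have "\<dots> = (\<integral>x. (\<Sum>a\<in>UNIV. x $ a * x $ a) \<partial>\<rho>)"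
      by (rule Bochner_Integration.integral_sum[where I=UNIV and M=\<rho> and f="\<lambda>a x. x $ a * x $ a", symmetric])
         (rule okay_cont_integrable[OF vH ok], intro continuous_intros)
    also have "\<dots> = (\<integral>x. (norm x)^2 \<partial>\<rho>)"
      by (simp add: power2_norm_eq_inner inner_vec_def)
    finally show ?thesis .
  qed
  have entry: "(\<integral>x. x $ a * x $ b \<partial>sym_law H \<rho>) =
      (if a = b then (\<integral>x. (norm x)^2 \<partial>\<rho>) / (real CARD('d) - 1) else 0)" for a b
  proof -
    have "(\<integral>x. x $ a * x $ b \<partial>sym_law H \<rho>) =
      (1 / Fd TYPE('d)) *\<^sub>R (\<Sum>\<pi>\<in>Perms. \<integral>x. (P_perm H \<pi> *v x) $ a * (P_perm H \<pi> *v x) $ b \<partial>\<rho>)"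
      by (rule sym_integral_cont(2)[OF vH ok]) (intro continuous_intros)
    also have "(\<Sum>\<pi>\<in>Perms. \<integral>x. (P_perm H \<pi> *v x) $ a * (P_perm H \<pi> *v x) $ b \<partial>\<rho>) =
        (\<integral>x. (\<Sum>\<pi>\<in>Perms. (P_perm H \<pi> *v x) $ a * (P_perm H \<pi> *v x) $ b) \<partial>\<rho>)"
      by (rule Bochner_Integration.integral_sum[where I=Perms and M=\<rho> and f="\<lambda>\<pi> x. (P_perm H \<pi> *v x) $ a * (P_perm H \<pi> *v x) $ b", symmetric])
         (rule okay_cont_integrable[OF vH ok],
          intro continuous_intros continuous_on_compose2[OF _ matrix_vector_mult_linear_continuous_on], auto)
    also have "\<dots> = (\<integral>x. Fd TYPE('d) * (if a = b then (norm x)^2 / (real CARD('d) - 1) else 0) \<partial>\<rho>)"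
      by (simp add: PW_Sigma[OF vH d2])
    also have "\<dots> = Fd TYPE('d) * (if a = b then (\<integral>x. (norm x)^2 \<partial>\<rho>) / (real CARD('d) - 1) else 0)"
      by simp
    finally show ?thesis using F0 by simp
  qed
  show ?thesis
    unfolding Sigma_mat_def[of "sym_law H \<rho>"]
    using d2 by (simp add: vec_eq_iff entry tr mat_def of_nat_diff)
qed

end

lemma prod_delta2:
  fixes a b :: real
  assumes "finite I" "m \<in> I" "m' \<in> I" "m \<noteq> m'"
  shows "(\<Prod>j\<in>I. if j = m then a else if j = m' then b else 1) = a * b"
proof -
  have "(\<Prod>j\<in>I. if j = m then a else if j = m' then b else 1) =
      (\<Prod>j\<in>I. (if j = m then a else 1) * (if j = m' then b else 1))"
    by (rule prod.cong) (use assms in auto)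
  also have "\<dots> = a * b" using assms by (simp add: prod.distrib)
  finally show ?thesis .
qed

lemma norm_sq_vec: "(norm (v :: real^'k))^2 = (\<Sum>a\<in>UNIV. (v $ a)^2)"
  by (simp add: norm_vec_def L2_set_def sum_nonneg)

lemma prod_var:
  fixes M :: "nat \<Rightarrow> 'a measure" and g :: "nat \<Rightarrow> 'a \<Rightarrow> real"
  assumes fin: "finite I" and ps: "\<And>m. prob_space (M m)"
    and int1: "\<And>m. m \<in> I \<Longrightarrow> integrable (M m) (g m)"
    and int2: "\<And>m. m \<in> I \<Longrightarrow> integrable (M m) (\<lambda>x. (g m x)^2)"
    and mean: "\<And>m. m \<in> I \<Longrightarrow> integral\<^sup>L (M m) (g m) = 0"
  shows "integrable (Pi\<^sub>M I M) (\<lambda>X. (\<Sum>m\<in>I. g m (X m))^2)"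
    and "(\<integral>X. (\<Sum>m\<in>I. g m (X m))^2 \<partial>Pi\<^sub>M I M) = (\<Sum>m\<in>I. \<integral>x. (g m x)^2 \<partial>M m)"
proof -
  interpret product_sigma_finite M
    by (rule product_sigma_finite.intro) (rule prob_space_imp_sigma_finite[OF ps])
  have one: "integral\<^sup>L (M j) (\<lambda>x. 1) = (1::real)" for j
    using prob_space.prob_space[OF ps[of j]] by (simp add: lebesgue_integral_const)
  have int_one: "integrable (M j) (\<lambda>x. 1::real)" for j
    using prob_space.finite_measure[OF ps[of j]] by (simp add: finite_measure.integrable_const)
  define h where "h m m' X = g m (X m) * g m' (X m')" for m m' X
  have cross: "integrable (Pi\<^sub>M I M) (h m m') \<and>
      integral\<^sup>L (Pi\<^sub>M I M) (h m m') = (if m = m' then \<integral>x. (g m x)^2 \<partial>M m else 0)"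
    if mI: "m \<in> I" and m'I: "m' \<in> I" for m m'
  proof (cases "m = m'")
    case True
    define f where "f j x = (if j = m then (g m x)^2 else 1)" for j x
    have fi: "integrable (M j) (f j)" if "j \<in> I" for j
      unfolding f_def using int2[OF mI] int_one by (cases "j = m") auto
    have eq: "(\<Prod>j\<in>I. f j (X j)) = h m m' X" for X
      unfolding f_def h_def using fin mI True by (simp add: power2_eq_square)
    have "integrable (Pi\<^sub>M I M) (\<lambda>X. \<Prod>j\<in>I. f j (X j))" by (rule product_integrable_prod[OF fin fi])
    then have i: "integrable (Pi\<^sub>M I M) (h m m')" by (simp add: eq)
    have "integral\<^sup>L (Pi\<^sub>M I M) (\<lambda>X. \<Prod>j\<in>I. f j (X j)) = (\<Prod>j\<in>I. integral\<^sup>L (M j) (f j))"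
      by (rule product_integral_prod[OF fin fi])
    also have "(\<Prod>j\<in>I. integral\<^sup>L (M j) (f j)) = (\<Prod>j\<in>I. if j = m then \<integral>x. (g m x)^2 \<partial>M m else 1)"
      by (rule prod.cong) (auto simp: f_def[abs_def] one prob_space.prob_space[OF ps])
    also have "\<dots> = \<integral>x. (g m x)^2 \<partial>M m" using fin mI by simp
    finally show ?thesis using i True by (simp add: eq)
  next
    case False
    define f where "f j x = (if j = m then g m x else if j = m' then g m' x else 1)" for j x
    have fi: "integrable (M j) (f j)" if "j \<in> I" for j
      unfolding f_def using int1[OF mI] int1[OF m'I] int_one by (cases "j = m"; cases "j = m'") auto
    have eq: "(\<Prod>j\<in>I. f j (X j)) = h m m' X" for X
      unfolding f_def h_def using prod_delta2[OF fin mI m'I False, of "g m (X m)" "g m' (X m')"]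
      by (simp add: if_distrib cong: if_cong)
    have "integrable (Pi\<^sub>M I M) (\<lambda>X. \<Prod>j\<in>I. f j (X j))" by (rule product_integrable_prod[OF fin fi])
    then have i: "integrable (Pi\<^sub>M I M) (h m m')" by (simp add: eq)
    have "integral\<^sup>L (Pi\<^sub>M I M) (\<lambda>X. \<Prod>j\<in>I. f j (X j)) = (\<Prod>j\<in>I. integral\<^sup>L (M j) (f j))"
      by (rule product_integral_prod[OF fin fi])
    also have "(\<Prod>j\<in>I. integral\<^sup>L (M j) (f j)) =
        (\<Prod>j\<in>I. if j = m then integral\<^sup>L (M m) (g m) else if j = m' then integral\<^sup>L (M m') (g m') else 1)"
      by (rule prod.cong) (auto simp: f_def[abs_def] one prob_space.prob_space[OF ps])
    also have "\<dots> = integral\<^sup>L (M m) (g m) * integral\<^sup>L (M m') (g m')"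
      by (rule prod_delta2[OF fin mI m'I False])
    also have "\<dots> = 0" using mean[OF mI] by simp
    finally show ?thesis using i False by (simp add: eq)
  qed
  have sq: "(\<Sum>m\<in>I. g m (X m))^2 = (\<Sum>m\<in>I. \<Sum>m'\<in>I. h m m' X)" for X
    by (simp add: power2_eq_square sum_product h_def)
  have inti: "integrable (Pi\<^sub>M I M) (\<lambda>X. \<Sum>m'\<in>I. h m m' X)" if "m \<in> I" for m
    by (rule Bochner_Integration.integrable_sum) (use cross that in blast)
  show "integrable (Pi\<^sub>M I M) (\<lambda>X. (\<Sum>m\<in>I. g m (X m))^2)"
    unfolding sq by (rule Bochner_Integration.integrable_sum) (rule inti)
  have "(\<integral>X. (\<Sum>m\<in>I. g m (X m))^2 \<partial>Pi\<^sub>M I M) = (\<integral>X. (\<Sum>m\<in>I. \<Sum>m'\<in>I. h m m' X) \<partial>Pi\<^sub>M I M)"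
    unfolding sq ..
  also have "\<dots> = (\<Sum>m\<in>I. \<integral>X. (\<Sum>m'\<in>I. h m m' X) \<partial>Pi\<^sub>M I M)"
    by (rule Bochner_Integration.integral_sum) (rule inti)
  also have "\<dots> = (\<Sum>m\<in>I. \<Sum>m'\<in>I. integral\<^sup>L (Pi\<^sub>M I M) (h m m'))"
  proof (rule sum.cong[OF refl])
    fix m assume "m \<in> I"
    then show "(\<integral>X. (\<Sum>m'\<in>I. h m m' X) \<partial>Pi\<^sub>M I M) = (\<Sum>m'\<in>I. integral\<^sup>L (Pi\<^sub>M I M) (h m m'))"
      by (intro Bochner_Integration.integral_sum) (use cross in blast)
  qed
  also have "\<dots> = (\<Sum>m\<in>I. \<Sum>m'\<in>I. if m = m' then \<integral>x. (g m x)^2 \<partial>M m else 0)"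
    by (intro sum.cong refl) (simp add: cross)
  also have "\<dots> = (\<Sum>m\<in>I. \<integral>x. (g m x)^2 \<partial>M m)"
    using fin by simp
  finally show "(\<integral>X. (\<Sum>m\<in>I. g m (X m))^2 \<partial>Pi\<^sub>M I M) = (\<Sum>m\<in>I. \<integral>x. (g m x)^2 \<partial>M m)" .
qed

lemma prod_var_vec:
  fixes M :: "nat \<Rightarrow> 'a measure" and Y :: "nat \<Rightarrow> 'a \<Rightarrow> real^'k"
  assumes fin: "finite I" and ps: "\<And>m. prob_space (M m)"
    and int1: "\<And>m a. m \<in> I \<Longrightarrow> integrable (M m) (\<lambda>x. Y m x $ a)"
    and int2: "\<And>m a. m \<in> I \<Longrightarrow> integrable (M m) (\<lambda>x. (Y m x $ a)^2)"
    and mean: "\<And>m a. m \<in> I \<Longrightarrow> (\<integral>x. Y m x $ a \<partial>M m) = 0"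
  shows "integrable (Pi\<^sub>M I M) (\<lambda>X. (norm (\<Sum>m\<in>I. Y m (X m)))^2)"
    and "(\<integral>X. (norm (\<Sum>m\<in>I. Y m (X m)))^2 \<partial>Pi\<^sub>M I M) = (\<Sum>m\<in>I. \<integral>x. (norm (Y m x))^2 \<partial>M m)"
proof -
  have eq: "(norm (\<Sum>m\<in>I. Y m (X m)))^2 = (\<Sum>a\<in>UNIV. (\<Sum>m\<in>I. Y m (X m) $ a)^2)" for X
    by (simp add: norm_sq_vec sum_component)
  have pv1: "integrable (Pi\<^sub>M I M) (\<lambda>X. (\<Sum>m\<in>I. Y m (X m) $ a)^2)" for a
    by (rule prod_var(1)[where g="\<lambda>m x. Y m x $ a"]) (simp_all add: fin ps int1 int2 mean)
  have pv2: "(\<integral>X. (\<Sum>m\<in>I. Y m (X m) $ a)^2 \<partial>Pi\<^sub>M I M) = (\<Sum>m\<in>I. \<integral>x. (Y m x $ a)^2 \<partial>M m)" for a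
    by (rule prod_var(2)[where g="\<lambda>m x. Y m x $ a"]) (simp_all add: fin ps int1 int2 mean)
  show "integrable (Pi\<^sub>M I M) (\<lambda>X. (norm (\<Sum>m\<in>I. Y m (X m)))^2)"
    unfolding eq by (rule Bochner_Integration.integrable_sum) (rule pv1)
  have "(\<integral>X. (norm (\<Sum>m\<in>I. Y m (X m)))^2 \<partial>Pi\<^sub>M I M) =
      (\<Sum>a\<in>UNIV. \<integral>X. (\<Sum>m\<in>I. Y m (X m) $ a)^2 \<partial>Pi\<^sub>M I M)"
    unfolding eq by (rule Bochner_Integration.integral_sum) (rule pv1)
  also have "\<dots> = (\<Sum>a\<in>UNIV. \<Sum>m\<in>I. \<integral>x. (Y m x $ a)^2 \<partial>M m)"
    by (simp add: pv2)
  also have "\<dots> = (\<Sum>m\<in>I. \<Sum>a\<in>UNIV. \<integral>x. (Y m x $ a)^2 \<partial>M m)" by (rule sum.swap)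
  also have "\<dots> = (\<Sum>m\<in>I. \<integral>x. (norm (Y m x))^2 \<partial>M m)"
  proof (rule sum.cong[OF refl])
    fix m assume mI: "m \<in> I"
    show "(\<Sum>a\<in>UNIV. \<integral>x. (Y m x $ a)^2 \<partial>M m) = \<integral>x. (norm (Y m x))^2 \<partial>M m"
      unfolding norm_sq_vec
      by (rule Bochner_Integration.integral_sum[symmetric]) (rule int2[OF mI])
  qed
  finally show "(\<integral>X. (norm (\<Sum>m\<in>I. Y m (X m)))^2 \<partial>Pi\<^sub>M I M) = (\<Sum>m\<in>I. \<integral>x. (norm (Y m x))^2 \<partial>M m)" .
qed

lemma exists_lab_set:
  fixes k :: "'d \<Rightarrow> nat"
  assumes "finite S"
  shows "\<exists>lab::nat \<Rightarrow> 'd. (\<forall>i\<in>S. card {m. m < sum k S \<and> lab m = i} = k i) \<and>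
                        (\<forall>m < sum k S. lab m \<in> S)"
  using assms
proof (induction S rule: finite_induct)
  case empty
  then show ?case by simp
next
  case (insert a S)
  obtain lab' where l1: "\<forall>i\<in>S. card {m. m < sum k S \<and> lab' m = i} = k i"
    and l2: "\<forall>m < sum k S. lab' m \<in> S" using insert.IH by blast
  define N where "N = sum k S"
  define lab where "lab m = (if m < N then lab' m else a)" for m
  have sN: "sum k (insert a S) = N + k a" using insert.hyps by (simp add: N_def)
  have c1: "card {m. m < sum k (insert a S) \<and> lab m = i} = k i" if iS: "i \<in> S" for i
  proof -
    have "{m. m < sum k (insert a S) \<and> lab m = i} = {m. m < sum k S \<and> lab' m = i}"
      using iS insert.hyps by (auto simp: sN lab_def N_def)
    then show ?thesis using l1 iS by simp
  qed
  have c2: "card {m. m < sum k (insert a S) \<and> lab m = a} = k a"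
  proof -
    have "{m. m < sum k (insert a S) \<and> lab m = a} = {N..<N + k a}"
    proof (rule set_eqI)
      fix m
      show "m \<in> {m. m < sum k (insert a S) \<and> lab m = a} \<longleftrightarrow> m \<in> {N..<N + k a}"
      proof (cases "m < N")
        case True
        then have "lab m \<in> S" using l2 by (simp add: lab_def N_def)
        then have "lab m \<noteq> a" using insert.hyps by auto
        then show ?thesis using True by simp
      next
        case False
        then show ?thesis by (simp add: lab_def sN)
      qed
    qed
    then show ?thesis by simp
  qed
  have r: "\<forall>m < sum k (insert a S). lab m \<in> insert a S"
    using l2 by (auto simp: lab_def N_def)
  show ?case using c1 c2 r by blast
qed

lemma labelling_prop:
  fixes \<theta> :: "real^'d"
  assumes th: "\<theta> \<in> Theta_n n"
  shows "real (card {m. m < n \<and> labelling n \<theta> m = i}) = real n * \<theta> $ i"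
proof -
  have "\<forall>i. \<exists>k::nat. real n * \<theta> $ i = real k" using th unfolding Theta_n_def by auto
  then obtain k :: "'d \<Rightarrow> nat" where k: "\<And>i. real n * \<theta> $ i = real (k i)" by metis
  have s1: "(\<Sum>i\<in>UNIV. \<theta> $ i) = 1" using th unfolding Theta_n_def prob_simplex_def by auto
  have "real (sum k UNIV) = (\<Sum>i\<in>UNIV. real n * \<theta> $ i)" by (simp add: k)
  also have "\<dots> = real n" by (simp add: sum_distrib_left[symmetric] s1)
  finally have "real (sum k UNIV) = real n" .
  then have sk: "sum k UNIV = n" by (simp only: of_nat_eq_iff)
  obtain lab :: "nat \<Rightarrow> 'd" where "\<forall>i. card {m. m < n \<and> lab m = i} = k i"
    using exists_lab_set[of UNIV k] sk by auto
  then have "\<exists>lab::nat\<Rightarrow>'d. \<forall>i. real (card {m. m < n \<and> lab m = i}) = real n * \<theta> $ i"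
    using k by auto
  then have "\<forall>i. real (card {m. m < n \<and> labelling n \<theta> m = i}) = real n * \<theta> $ i"
    unfolding labelling_def by (rule someI_ex)
  then show ?thesis by blast
qed

lemma sum_group_lab:
  fixes f :: "'d::finite \<Rightarrow> real" and n :: nat and lab :: "nat \<Rightarrow> 'd"
  shows "(\<Sum>m<n. f (lab m)) = (\<Sum>i\<in>UNIV. real (card {m. m < n \<and> lab m = i}) * f i)"
proof -
  have "(\<Sum>m<n. f (lab m)) = (\<Sum>i\<in>UNIV. \<Sum>m\<in>{m\<in>{..<n}. lab m = i}. f (lab m))"
    by (rule sum.group[symmetric]) auto
  also have "\<dots> = (\<Sum>i\<in>UNIV. real (card {m. m < n \<and> lab m = i}) * f i)"
  proof (rule sum.cong[OF refl])
    fix i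
    have "(\<Sum>m\<in>{m\<in>{..<n}. lab m = i}. f (lab m)) = (\<Sum>m\<in>{m\<in>{..<n}. lab m = i}. f i)"
      by (rule sum.cong) auto
    also have "{m\<in>{..<n}. lab m = i} = {m. m < n \<and> lab m = i}" by auto
    finally show "(\<Sum>m\<in>{m\<in>{..<n}. lab m = i}. f (lab m)) = real (card {m. m < n \<and> lab m = i}) * f i"
      by simp
  qed
  finally show ?thesis .
qed

context
  fixes H :: "real^'k^'d"
  assumes vH: "valid_H H"
begin

lemma okay_ae_nonneg:
  assumes "okay H \<mu>"
  shows "AE x in \<mu>. 0 \<le> 1 + gamma H i \<bullet> x"
proof -
  have "AE x in \<mu>. x \<in> Xd H" using assms unfolding okay_def by auto
  then show ?thesis by eventually_elim (simp add: Xd_def)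
qed

lemma gamma_meas: "(\<lambda>x. 1 + gamma H i \<bullet> x) \<in> borel_measurable \<mu>" if "sets \<mu> = sets borel"
  by (rule meas_borel_cong[OF that]) measurable

lemma W_props:
  assumes g: "good H \<mu>"
  shows "okay H (W H \<mu> i)"
proof -
  have ok: "okay H \<mu>" and m: "integral\<^sup>L \<mu> (\<lambda>x. x) = 0" using g unfolding good_def by auto
  have p: "prob_space \<mu>" and s: "sets \<mu> = sets borel" and ae: "AE x in \<mu>. x \<in> Xd H"
    using ok unfolding okay_def by auto
  have gm: "(\<lambda>x. ennreal (1 + gamma H i \<bullet> x)) \<in> borel_measurable \<mu>"
    using gamma_meas[OF s] by measurable
  have int: "integrable \<mu> (\<lambda>x. 1 + gamma H i \<bullet> x)"
    by (rule okay_cont_integrable[OF vH ok]) (intro continuous_intros)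
  have ix: "integrable \<mu> (\<lambda>x. x)" by (rule okay_cont_integrable[OF vH ok continuous_on_id])
  have "emeasure (W H \<mu> i) (space (W H \<mu> i)) =
      \<integral>\<^sup>+x. ennreal (1 + gamma H i \<bullet> x) * indicator (space \<mu>) x \<partial>\<mu>"
    unfolding W_def by (subst emeasure_density) (simp_all add: gm)
  also have "\<dots> = \<integral>\<^sup>+x. ennreal (1 + gamma H i \<bullet> x) \<partial>\<mu>"
    by (rule nn_integral_cong) (simp add: indicator_def)
  also have "\<dots> = ennreal (\<integral>x. 1 + gamma H i \<bullet> x \<partial>\<mu>)"
    by (rule nn_integral_eq_integral[OF int okay_ae_nonneg[OF ok]])
  also have "(\<integral>x. 1 + gamma H i \<bullet> x \<partial>\<mu>) = 1"
  proof -
    have "(\<integral>x. 1 + gamma H i \<bullet> x \<partial>\<mu>) = (\<integral>x. 1 \<partial>\<mu>) + (\<integral>x. gamma H i \<bullet> x \<partial>\<mu>)"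
      by (rule Bochner_Integration.integral_add)
         (simp_all add: prob_space.finite_measure[OF p] finite_measure.integrable_const
           integrable_inner_right ix)
    also have "(\<integral>x. gamma H i \<bullet> x \<partial>\<mu>) = 0"
      using integral_inner_right[of "gamma H i" \<mu> "\<lambda>x. x"] ix m by simp
    also have "(\<integral>x. 1 \<partial>\<mu>) = (1::real)"
      using prob_space.prob_space[OF p] by (simp add: lebesgue_integral_const)
    finally show ?thesis by simp
  qed
  finally have e1: "emeasure (W H \<mu> i) (space (W H \<mu> i)) = 1" by simp
  have sW: "sets (W H \<mu> i) = sets borel" unfolding W_def using s by simp
  have aeW: "AE x in W H \<mu> i. x \<in> Xd H"
    unfolding W_def using ae by (subst AE_density[OF gm]) auto
  show ?thesis unfolding okay_def using prob_spaceI[OF e1] sW aeW by auto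
qed

lemma W_integral:
  fixes f :: "real^'k \<Rightarrow> 'b::{banach, second_countable_topology}"
  assumes ok: "okay H \<mu>" and f: "f \<in> borel_measurable borel"
  shows "integral\<^sup>L (W H \<mu> i) f = (\<integral>x. (1 + gamma H i \<bullet> x) *\<^sub>R f x \<partial>\<mu>)"
proof -
  have s: "sets \<mu> = sets borel" using ok unfolding okay_def by auto
  show ?thesis unfolding W_def
    by (rule integral_density[OF meas_borel_cong[OF s f] gamma_meas[OF s] okay_ae_nonneg[OF ok]])
qed

lemma W_mean:
  assumes g: "good H \<mu>"
  shows "integral\<^sup>L (W H \<mu> i) (\<lambda>x. x) = Sigma_mat \<mu> *v gamma H i"
proof -
  have ok: "okay H \<mu>" and m: "integral\<^sup>L \<mu> (\<lambda>x. x) = 0" using g unfolding good_def by auto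
  have okW: "okay H (W H \<mu> i)" by (rule W_props[OF g])
  have ixW: "integrable (W H \<mu> i) (\<lambda>x. x)" by (rule okay_cont_integrable[OF vH okW continuous_on_id])
  have ix: "integrable \<mu> (\<lambda>x. x)" by (rule okay_cont_integrable[OF vH ok continuous_on_id])
  show ?thesis
  proof (subst vec_eq_iff, intro allI)
    fix a
    have "integral\<^sup>L (W H \<mu> i) (\<lambda>x. x) $ a = (\<integral>x. x $ a \<partial>W H \<mu> i)"
      using integral_bounded_linear[OF bounded_linear_vec_nth ixW, of a] by simp
    also have "\<dots> = (\<integral>x. (1 + gamma H i \<bullet> x) * x $ a \<partial>\<mu>)"
      using W_integral[OF ok, of "\<lambda>x. x $ a"] by simp
    also have "\<dots> = (\<integral>x. x $ a + (\<Sum>b\<in>UNIV. gamma H i $ b * (x $ a * x $ b)) \<partial>\<mu>)"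
      by (rule Bochner_Integration.integral_cong[OF refl])
         (simp add: inner_vec_def algebra_simps sum_distrib_left sum_distrib_right)
    also have "\<dots> = (\<integral>x. x $ a \<partial>\<mu>) + (\<Sum>b\<in>UNIV. gamma H i $ b * (\<integral>x. x $ a * x $ b \<partial>\<mu>))"
    proof -
      have ia: "integrable \<mu> (\<lambda>x. x $ a)"
        by (rule okay_cont_integrable[OF vH ok]) (intro continuous_intros)
      have iab: "integrable \<mu> (\<lambda>x. x $ a * x $ b)" for b
        by (rule okay_cont_integrable[OF vH ok]) (intro continuous_intros)
      have "(\<integral>x. x $ a + (\<Sum>b\<in>UNIV. gamma H i $ b * (x $ a * x $ b)) \<partial>\<mu>) =
          (\<integral>x. x $ a \<partial>\<mu>) + (\<integral>x. (\<Sum>b\<in>UNIV. gamma H i $ b * (x $ a * x $ b)) \<partial>\<mu>)"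
        by (rule Bochner_Integration.integral_add[OF ia])
           (intro Bochner_Integration.integrable_sum integrable_mult_right iab)
      also have "(\<integral>x. (\<Sum>b\<in>UNIV. gamma H i $ b * (x $ a * x $ b)) \<partial>\<mu>) =
          (\<Sum>b\<in>UNIV. gamma H i $ b * (\<integral>x. x $ a * x $ b \<partial>\<mu>))"
        by (subst Bochner_Integration.integral_sum) (simp_all add: iab)
      finally show ?thesis .
    qed
    also have "(\<integral>x. x $ a \<partial>\<mu>) = 0"
      using integral_bounded_linear[OF bounded_linear_vec_nth ix, of a] m by simp
    also have "(\<Sum>b\<in>UNIV. gamma H i $ b * (\<integral>x. x $ a * x $ b \<partial>\<mu>)) = (Sigma_mat \<mu> *v gamma H i) $ a"
      by (simp add: matrix_vector_mult_def Sigma_mat_def mult.commute)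
    finally show "integral\<^sup>L (W H \<mu> i) (\<lambda>x. x) $ a = (Sigma_mat \<mu> *v gamma H i) $ a" by simp
  qed
qed

end

definition vW :: "real^'k^'d \<Rightarrow> (real^'k) measure \<Rightarrow> 'd \<Rightarrow> real" where
  "vW H \<mu> i = (\<integral>x. (norm (matrix_inv (Sigma_mat \<mu>) *v (x - Sigma_mat \<mu> *v gamma H i)))^2 \<partial>W H \<mu> i)"

lemma cont_Av: "continuous_on UNIV (\<lambda>x. ((A::real^'n^'m) *v (x - c)) $ a)"
  unfolding matrix_vector_mult_def by (simp, intro continuous_intros)

lemma cont_Av2: "continuous_on UNIV (\<lambda>x. (((A::real^'n^'m) *v (x - c)) $ a)^2)"
  by (intro continuous_on_power cont_Av)

lemma cont_normAv: "continuous_on UNIV (\<lambda>x. (norm ((A::real^'n^'m) *v (x - c)))^2)"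
proof -
  have "continuous_on UNIV (\<lambda>x. (A::real^'n^'m) *v (x - c))"
    by (rule continuous_on_compose2[OF matrix_vector_mult_linear_continuous_on[of UNIV A]])
       (intro continuous_intros, auto)
  then show ?thesis by (intro continuous_intros)
qed

context
  fixes H :: "real^'k^'d"
  assumes vH: "valid_H H"
begin

lemma H_gamma: "H *v gamma H i = axis i 1 - (1 / real CARD('d)) *\<^sub>R vec 1"
  unfolding gamma_def by (simp add: HHt[OF vH] axis_def)

lemma B_Sigma_gamma:
  assumes "invertible (Sigma_mat \<mu>)"
  shows "matrix_inv (Sigma_mat \<mu>) *v (Sigma_mat \<mu> *v v) = v"
  by (simp add: matrix_vector_mul_assoc matrix_inv_props(2)[OF assms])

lemma theta_from_lab:
  assumes th: "\<theta> \<in> Theta_n n" and n1: "n \<ge> 1" and inv: "invertible (Sigma_mat \<mu>)"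
  shows "\<theta> = (\<chi> i. 1 / real CARD('d)) + H *v (matrix_inv (Sigma_mat \<mu>) *v
      ((1 / real n) *\<^sub>R (\<Sum>m<n. Sigma_mat \<mu> *v gamma H (labelling n \<theta> m))))"
proof -
  define lab where "lab = labelling n \<theta>"
  define B where "B = matrix_inv (Sigma_mat \<mu>)"
  have "H *v (B *v ((1 / real n) *\<^sub>R (\<Sum>m<n. Sigma_mat \<mu> *v gamma H (lab m)))) =
      (1 / real n) *\<^sub>R (\<Sum>m<n. axis (lab m) 1 - (1 / real CARD('d)) *\<^sub>R vec 1)"
    by (simp add: B_def matrix_vector_mult_scaleR vec.sum B_Sigma_gamma[OF inv] H_gamma)
  also have "\<dots> = (\<chi> i. \<theta> $ i - 1 / real CARD('d))"
  proof (subst vec_eq_iff, intro allI)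
    fix i
    have cnt: "(\<Sum>m<n. (if lab m = i then 1 else 0)) = real (card {m. m < n \<and> lab m = i})"
      using sum_group_lab[where f="\<lambda>j. if j = i then 1 else 0" and n=n and lab=lab] by (simp add: if_distrib cong: if_cong)
    have e1: "(\<Sum>m<n. axis (lab m) 1 - (1 / real CARD('d)) *\<^sub>R vec 1) $ i =
        (\<Sum>m<n. (if lab m = i then 1 else 0) - 1 / real CARD('d))"
      by (simp only: sum_component vector_minus_component vector_scaleR_component vec_component
          axis_def vec_lambda_beta) (auto intro!: sum.cong)
    have "((1 / real n) *\<^sub>R (\<Sum>m<n. axis (lab m) 1 - (1 / real CARD('d)) *\<^sub>R vec 1)) $ i =
        (1 / real n) * ((\<Sum>m<n. (if lab m = i then 1 else 0)) - real n / real CARD('d))"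
      by (subst vector_scaleR_component, subst e1) (simp add: sum_subtractf)
    also have "\<dots> = \<theta> $ i - 1 / real CARD('d)"
      using labelling_prop[OF th, of i] n1 cnt unfolding lab_def by (simp add: field_simps)
    finally show "((1 / real n) *\<^sub>R (\<Sum>m<n. axis (lab m) 1 - (1 / real CARD('d)) *\<^sub>R vec 1)) $ i =
        (\<chi> i. \<theta> $ i - 1 / real CARD('d)) $ i" by simp
  qed
  finally show ?thesis by (simp add: vec_eq_iff B_def lab_def)
qed

lemma risk_eq:
  assumes n1: "n \<ge> 1" and g: "good H \<mu>" and inv: "invertible (Sigma_mat \<mu>)"
    and th: "\<theta> \<in> Theta_n n"
  shows "R_fc H n \<theta> \<mu> = ennreal ((1 / real n) * (\<Sum>i\<in>UNIV. \<theta> $ i * vW H \<mu> i))"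
proof -
  define lab where "lab = labelling n \<theta>"
  define S where "S = Sigma_mat \<mu>"
  define B where "B = matrix_inv S"
  define c where "c i = S *v gamma H i" for i
  define M where "M m = W H \<mu> (lab m)" for m
  define Y where "Y m x = B *v (x - c (lab m))" for m x
  have okW: "okay H (W H \<mu> i)" for i by (rule W_props[OF vH g])
  have ps: "prob_space (M m)" for m using okW unfolding M_def okay_def by auto
  have th_eq: "\<theta> = (\<chi> i. 1 / real CARD('d)) + H *v (B *v ((1 / real n) *\<^sub>R (\<Sum>m<n. c (lab m))))"
    using theta_from_lab[OF th n1 inv] unfolding B_def S_def c_def lab_def .
  have pw: "(norm (theta_hat H \<mu> n X - \<theta>))^2 = (1 / real n)^2 * (norm (\<Sum>m<n. Y m (X m)))^2" for X
  proof -
    have "theta_hat H \<mu> n X - \<theta> =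
        H *v (B *v ((1 / real n) *\<^sub>R (\<Sum>m<n. X m))) - H *v (B *v ((1 / real n) *\<^sub>R (\<Sum>m<n. c (lab m))))"
      by (subst th_eq) (simp add: theta_hat_def B_def S_def)
    also have "\<dots> = H *v ((1 / real n) *\<^sub>R (\<Sum>m<n. Y m (X m)))"
    proof -
      have ys: "(\<Sum>m<n. Y m (X m)) = B *v ((\<Sum>m<n. X m) - (\<Sum>m<n. c (lab m)))"
        by (simp only: Y_def vec.sum[symmetric] sum_subtractf)
      show ?thesis
        by (simp only: ys matrix_vector_mult_scaleR matrix_vector_mult_diff_distrib scaleR_diff_right)
    qed
    finally have "norm (theta_hat H \<mu> n X - \<theta>) = norm ((1 / real n) *\<^sub>R (\<Sum>m<n. Y m (X m)))"
      by (simp add: norm_H[OF vH])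
    then show ?thesis by (simp add: power_divide)
  qed
  have int1: "integrable (M m) (\<lambda>x. Y m x $ a)" for m a
    unfolding M_def Y_def by (rule okay_cont_integrable[OF vH okW cont_Av])
  have int2: "integrable (M m) (\<lambda>x. (Y m x $ a)^2)" for m a
    unfolding M_def Y_def by (rule okay_cont_integrable[OF vH okW cont_Av2])
  have mean: "(\<integral>x. Y m x $ a \<partial>M m) = 0" for m a
  proof -
    have bl: "bounded_linear (\<lambda>v. (B *v v) $ a)"
      by (rule bounded_linear_compose[OF bounded_linear_vec_nth matrix_vector_mul_bounded_linear])
    have ixc: "integrable (M m) (\<lambda>x. x - c (lab m))"
      unfolding M_def by (rule okay_cont_integrable[OF vH okW]) (intro continuous_intros)
    have "(\<integral>x. Y m x $ a \<partial>M m) = (B *v (\<integral>x. x - c (lab m) \<partial>M m)) $ a"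
      unfolding Y_def by (rule integral_bounded_linear[OF bl ixc])
    also have "(\<integral>x. x - c (lab m) \<partial>M m) = 0"
    proof -
      have ix: "integrable (M m) (\<lambda>x. x)"
        unfolding M_def by (rule okay_cont_integrable[OF vH okW continuous_on_id])
      have ic: "integrable (M m) (\<lambda>x. c (lab m))"
        using prob_space.finite_measure[OF ps[of m]] by (simp add: finite_measure.integrable_const)
      have "(\<integral>x. x - c (lab m) \<partial>M m) = (\<integral>x. x \<partial>M m) - (\<integral>x. c (lab m) \<partial>M m)"
        by (rule Bochner_Integration.integral_diff[OF ix ic])
      also have "(\<integral>x. x \<partial>M m) = c (lab m)"
        unfolding M_def c_def S_def by (rule W_mean[OF vH g])
      also have "(\<integral>x. c (lab m) \<partial>M m) = c (lab m)"
        using prob_space.prob_space[OF ps[of m]] by (simp add: lebesgue_integral_const)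
      finally show ?thesis by simp
    qed
    finally show ?thesis by simp
  qed
  note pv = prod_var_vec[of "{..<n}" M Y, OF _ ps int1 int2 mean, simplified]
  have "R_fc H n \<theta> \<mu> = \<integral>\<^sup>+X. ennreal ((norm (theta_hat H \<mu> n X - \<theta>))^2) \<partial>Pi\<^sub>M {..<n} M"
    using inv by (simp add: R_fc_def M_def[abs_def] lab_def)
  also have "\<dots> = \<integral>\<^sup>+X. ennreal ((1 / real n)^2 * (norm (\<Sum>m<n. Y m (X m)))^2) \<partial>Pi\<^sub>M {..<n} M"
    by (simp add: pw)
  also have "\<dots> = ennreal (\<integral>X. (1 / real n)^2 * (norm (\<Sum>m<n. Y m (X m)))^2 \<partial>Pi\<^sub>M {..<n} M)"
    by (rule nn_integral_eq_integral) (simp_all add: pv(1))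
  also have "(\<integral>X. (1 / real n)^2 * (norm (\<Sum>m<n. Y m (X m)))^2 \<partial>Pi\<^sub>M {..<n} M) =
      (1 / real n)^2 * (\<Sum>m<n. \<integral>x. (norm (Y m x))^2 \<partial>M m)"
    by (simp add: pv(2))
  also have "(\<Sum>m<n. \<integral>x. (norm (Y m x))^2 \<partial>M m) = (\<Sum>m<n. vW H \<mu> (lab m))"
    by (simp add: vW_def Y_def M_def B_def S_def c_def)
  also have "\<dots> = (\<Sum>i\<in>UNIV. real (card {m. m < n \<and> lab m = i}) * vW H \<mu> i)"
    by (rule sum_group_lab)
  also have "\<dots> = (\<Sum>i\<in>UNIV. real n * \<theta> $ i * vW H \<mu> i)"
    using labelling_prop[OF th] by (simp add: lab_def)
  also have "(1 / real n)^2 * \<dots> = (1 / real n) * (\<Sum>i\<in>UNIV. \<theta> $ i * vW H \<mu> i)"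
    using n1 by (simp add: sum_distrib_left power2_eq_square field_simps)
  finally show ?thesis .
qed

lemma vW_eq:
  assumes g: "good H \<mu>" and inv: "invertible (Sigma_mat \<mu>)"
  shows "vW H \<mu> i = (\<integral>x. (1 + gamma H i \<bullet> x) * (norm (matrix_inv (Sigma_mat \<mu>) *v x))^2 \<partial>\<mu>)
      - (1 - 1 / real CARD('d))"
proof -
  define S where "S = Sigma_mat \<mu>"
  define B where "B = matrix_inv S"
  define \<gamma> where "\<gamma> = gamma H i"
  have ok: "okay H \<mu>" using g unfolding good_def by auto
  have okW: "okay H (W H \<mu> i)" by (rule W_props[OF vH g])
  have ps: "prob_space (W H \<mu> i)" using okW unfolding okay_def by auto
  have Bc: "B *v (S *v \<gamma>) = \<gamma>" unfolding B_def S_def by (rule B_Sigma_gamma[OF inv])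
  have gg: "\<gamma> \<bullet> \<gamma> = 1 - 1 / real CARD('d)" unfolding \<gamma>_def by (simp add: gamma_gamma[OF vH])
  have pw: "(norm (B *v (x - S *v \<gamma>)))^2 = (norm (B *v x))^2 - 2 * ((B *v x) \<bullet> \<gamma>) + \<gamma> \<bullet> \<gamma>" for x
  proof -
    have "B *v (x - S *v \<gamma>) = B *v x - \<gamma>" by (simp add: matrix_vector_mult_diff_distrib Bc)
    then show ?thesis
      by (simp add: power2_norm_eq_inner inner_diff_left inner_diff_right inner_commute)
  qed
  have cB: "continuous_on UNIV (\<lambda>x. B *v x)" by (rule matrix_vector_mult_linear_continuous_on)
  have i1: "integrable (W H \<mu> i) (\<lambda>x. (norm (B *v x))^2)"
    by (rule okay_cont_integrable[OF vH okW]) (intro continuous_intros cB)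
  have i2: "integrable (W H \<mu> i) (\<lambda>x. (B *v x) \<bullet> \<gamma>)"
    by (rule okay_cont_integrable[OF vH okW]) (intro continuous_intros cB)
  have ic: "integrable (W H \<mu> i) (\<lambda>x. \<gamma> \<bullet> \<gamma>)"
    using prob_space.finite_measure[OF ps] by (simp add: finite_measure.integrable_const)
  have ix: "integrable (W H \<mu> i) (\<lambda>x. x)" by (rule okay_cont_integrable[OF vH okW continuous_on_id])
  have "vW H \<mu> i = (\<integral>x. (norm (B *v x))^2 - 2 * ((B *v x) \<bullet> \<gamma>) + \<gamma> \<bullet> \<gamma> \<partial>W H \<mu> i)"
    unfolding vW_def B_def[symmetric] S_def[symmetric] \<gamma>_def[symmetric] pw ..
  also have "\<dots> = (\<integral>x. (norm (B *v x))^2 \<partial>W H \<mu> i) - 2 * (\<integral>x. (B *v x) \<bullet> \<gamma> \<partial>W H \<mu> i) + \<gamma> \<bullet> \<gamma>"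
    using i1 i2 ic prob_space.prob_space[OF ps]
    by (simp add: Bochner_Integration.integral_diff Bochner_Integration.integral_add lebesgue_integral_const)
  also have "(\<integral>x. (B *v x) \<bullet> \<gamma> \<partial>W H \<mu> i) = \<gamma> \<bullet> \<gamma>"
  proof -
    have bl: "bounded_linear (\<lambda>v. (B *v v) \<bullet> \<gamma>)"
      by (rule bounded_linear_inner_left_comp[OF matrix_vector_mul_bounded_linear])
    have "(\<integral>x. (B *v x) \<bullet> \<gamma> \<partial>W H \<mu> i) = (B *v (\<integral>x. x \<partial>W H \<mu> i)) \<bullet> \<gamma>"
      by (rule integral_bounded_linear[OF bl ix])
    also have "(\<integral>x. x \<partial>W H \<mu> i) = S *v \<gamma>" unfolding S_def \<gamma>_def by (rule W_mean[OF vH g])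
    finally show ?thesis by (simp add: Bc)
  qed
  also have "(\<integral>x. (norm (B *v x))^2 \<partial>W H \<mu> i) = (\<integral>x. (1 + gamma H i \<bullet> x) * (norm (B *v x))^2 \<partial>\<mu>)"
    using W_integral[OF vH ok, of "\<lambda>x. (norm (B *v x))^2" i]
    by (simp add: borel_measurable_continuous_onI continuous_intros cB)
  finally show ?thesis using gg by (simp add: B_def S_def)
qed

end

lemma scal_mat_entry: "((((a::real) *\<^sub>R mat 1) :: real^'n^'n) $ i $ j) = (if i = j then a else 0)"
  by (simp add: mat_def)

lemma ifz1: "(if P then (a::real) else 0) * b = (if P then a * b else 0)" by simp
lemma ifz2: "b * (if P then (a::real) else 0) = (if P then b * a else 0)" by simp

lemma scal_mat_mult: "(((a::real) *\<^sub>R mat 1) :: real^'n^'n) ** (b *\<^sub>R mat 1) = (a * b) *\<^sub>R mat 1"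
  by (simp only: vec_eq_iff matrix_matrix_mult_def scal_mat_entry vec_lambda_beta ifz1 ifz2)
     (simp add: if_distrib cong: if_cong)

lemma scal_mat_vec: "(((a::real) *\<^sub>R mat 1) :: real^'n^'n) *v x = a *\<^sub>R x"
  by (simp only: vec_eq_iff matrix_vector_mult_def scal_mat_entry vec_lambda_beta ifz1)
     simp

lemma scal_mat_inv:
  assumes "(a::real) \<noteq> 0"
  shows "invertible ((a *\<^sub>R mat 1) :: real^'n^'n)" "matrix_inv ((a *\<^sub>R mat 1) :: real^'n^'n) = (1 / a) *\<^sub>R mat 1"
proof -
  have e1: "((a *\<^sub>R mat 1) :: real^'n^'n) ** ((1 / a) *\<^sub>R mat 1) = mat 1"
    using assms by (simp add: scal_mat_mult)
  have e2: "(((1 / a) *\<^sub>R mat 1) :: real^'n^'n) ** (a *\<^sub>R mat 1) = mat 1"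
    using assms by (simp add: scal_mat_mult)
  show "invertible ((a *\<^sub>R mat 1) :: real^'n^'n)" unfolding invertible_def using e1 e2 by blast
  show "matrix_inv ((a *\<^sub>R mat 1) :: real^'n^'n) = (1 / a) *\<^sub>R mat 1"
    by (rule matrix_inv_unique'[OF e1 e2])
qed

lemma axis_Theta:
  assumes "n \<ge> 1"
  shows "(axis j 1 :: real^'d) \<in> Theta_n n"
proof -
  have "\<exists>k::nat. real n * axis j 1 $ i = real k" for i
    by (cases "i = j") (auto simp: axis_def intro: exI[of _ n] exI[of _ 0])
  moreover have "axis j (1::real) \<in> prob_simplex"
    by (simp add: prob_simplex_def axis_def)
  ultimately show ?thesis unfolding Theta_n_def by auto
qed

lemma sum_theta: "\<theta> \<in> Theta_n n \<Longrightarrow> (\<Sum>i\<in>UNIV. \<theta> $ i) = 1"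
  unfolding Theta_n_def prob_simplex_def by auto

context
  fixes H :: "real^'k^'d"
  assumes vH: "valid_H H"
begin

lemma trace_Sigma:
  assumes ok: "okay H \<rho>"
  shows "trace (Sigma_mat \<rho>) = (\<integral>x. (norm x)^2 \<partial>\<rho>)"
proof -
  have "trace (Sigma_mat \<rho>) = (\<Sum>a\<in>UNIV. \<integral>x. x $ a * x $ a \<partial>\<rho>)"
    by (simp add: trace_def Sigma_mat_def)
  also have "\<dots> = (\<integral>x. (\<Sum>a\<in>UNIV. x $ a * x $ a) \<partial>\<rho>)"
    by (rule Bochner_Integration.integral_sum[where I=UNIV and M=\<rho> and f="\<lambda>a x. x $ a * x $ a", symmetric])
       (rule okay_cont_integrable[OF vH ok], intro continuous_intros)
  also have "\<dots> = (\<integral>x. (norm x)^2 \<partial>\<rho>)"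
    by (simp add: power2_norm_eq_inner inner_vec_def)
  finally show ?thesis .
qed

lemma K_int:
  assumes ok: "okay H \<rho>" and inv: "invertible (Sigma_mat \<rho>)"
  shows "(\<integral>x. (matrix_inv (Sigma_mat \<rho>) *v x) \<bullet> x \<partial>\<rho>) = real CARD('k)"
proof -
  define B where "B = matrix_inv (Sigma_mat \<rho>)"
  have iab: "integrable \<rho> (\<lambda>x. B $ a $ b * (x $ b * x $ a))" for a b
    by (rule okay_cont_integrable[OF vH ok]) (intro continuous_intros)
  have pt: "(B *v x) \<bullet> x = (\<Sum>a\<in>UNIV. \<Sum>b\<in>UNIV. B $ a $ b * (x $ b * x $ a))" for x
    by (simp add: inner_vec_def matrix_vector_mult_def sum_distrib_right mult.assoc)
  have "(\<integral>x. (B *v x) \<bullet> x \<partial>\<rho>) = (\<integral>x. (\<Sum>a\<in>UNIV. \<Sum>b\<in>UNIV. B $ a $ b * (x $ b * x $ a)) \<partial>\<rho>)"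
    by (simp only: pt)
  also have "\<dots> = (\<Sum>a\<in>UNIV. \<integral>x. (\<Sum>b\<in>UNIV. B $ a $ b * (x $ b * x $ a)) \<partial>\<rho>)"
    by (rule Bochner_Integration.integral_sum) (intro Bochner_Integration.integrable_sum iab)
  also have "\<dots> = (\<Sum>a\<in>UNIV. \<Sum>b\<in>UNIV. \<integral>x. B $ a $ b * (x $ b * x $ a) \<partial>\<rho>)"
    by (intro sum.cong refl Bochner_Integration.integral_sum iab)
  also have "\<dots> = (\<Sum>a\<in>UNIV. \<Sum>b\<in>UNIV. B $ a $ b * (\<integral>x. x $ b * x $ a \<partial>\<rho>))"
    by simp
  also have "\<dots> = trace (B ** Sigma_mat \<rho>)"
    by (simp add: trace_def matrix_matrix_mult_def Sigma_mat_def)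
  also have "\<dots> = real CARD('k)"
    using matrix_inv_props(2)[OF inv] by (simp add: B_def trace_I)
  finally show ?thesis by (simp add: B_def)
qed

lemma CS_ineq:
  assumes ok: "okay H \<rho>" and inv: "invertible (Sigma_mat \<rho>)" and k1: "CARD('k) \<ge> 1"
  defines "Q \<equiv> (\<integral>x. (norm (matrix_inv (Sigma_mat \<rho>) *v x))^2 \<partial>\<rho>)"
    and "T \<equiv> (\<integral>x. (norm x)^2 \<partial>\<rho>)"
  shows "T > 0" and "(real CARD('k))^2 \<le> T * Q"
proof -
  define B where "B = matrix_inv (Sigma_mat \<rho>)"
  define K where "K = real CARD('k)"
  have K0: "K > 0" using k1 by (simp add: K_def)
  have cB: "continuous_on UNIV (\<lambda>x. B *v x)" by (rule matrix_vector_mult_linear_continuous_on)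
  have iQ: "integrable \<rho> (\<lambda>x. (norm (B *v x))^2)"
    by (rule okay_cont_integrable[OF vH ok]) (intro continuous_intros cB)
  have iT: "integrable \<rho> (\<lambda>x. (norm x)^2)"
    by (rule okay_cont_integrable[OF vH ok]) (intro continuous_intros)
  have iK: "integrable \<rho> (\<lambda>x. (B *v x) \<bullet> x)"
    by (rule okay_cont_integrable[OF vH ok]) (intro continuous_intros cB)
  have Kint: "(\<integral>x. (B *v x) \<bullet> x \<partial>\<rho>) = K" unfolding B_def K_def by (rule K_int[OF ok inv])
  have main: "2 * s * K \<le> s^2 * Q + T" for s
  proof -
    have pw: "0 \<le> s^2 * (norm (B *v x))^2 + (norm x)^2 - 2 * s * ((B *v x) \<bullet> x)" for x
    proof -
      have "0 \<le> (s *\<^sub>R (B *v x) - x) \<bullet> (s *\<^sub>R (B *v x) - x)" by simp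
      also have "\<dots> = s^2 * ((B *v x) \<bullet> (B *v x)) + x \<bullet> x - 2 * s * ((B *v x) \<bullet> x)"
        by (simp add: inner_diff_left inner_diff_right inner_commute power2_eq_square algebra_simps)
      finally show ?thesis by (simp only: power2_norm_eq_inner)
    qed
    have "0 \<le> (\<integral>x. s^2 * (norm (B *v x))^2 + (norm x)^2 - 2 * s * ((B *v x) \<bullet> x) \<partial>\<rho>)"
      by (rule integral_nonneg_AE) (rule AE_I2, rule pw)
    also have "\<dots> = s^2 * Q + T - 2 * s * K"
      using iQ iT iK Kint
      by (simp add: Q_def T_def B_def Bochner_Integration.integral_diff Bochner_Integration.integral_add)
    finally show ?thesis by simp
  qed
  show Tpos: "T > 0"
  proof (rule ccontr)
    assume "\<not> T > 0"
    then have T0: "T \<le> 0" by simp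
    define s where "s = K / (\<bar>Q\<bar> + 1)"
    have s0: "s > 0" using K0 by (simp add: s_def)
    have "2 * s * K \<le> s^2 * Q + T" by (rule main)
    also have "\<dots> \<le> s^2 * \<bar>Q\<bar>"
    proof -
      have "s^2 * Q \<le> s^2 * \<bar>Q\<bar>" by (rule mult_left_mono) simp_all
      then show ?thesis using T0 by linarith
    qed
    finally have "2 * s * K \<le> s * (s * \<bar>Q\<bar>)" by (simp add: power2_eq_square mult_ac)
    then have "2 * K \<le> s * \<bar>Q\<bar>" using s0 by (simp add: mult_le_cancel_left_pos mult.assoc)
    also have "s * \<bar>Q\<bar> = K * (\<bar>Q\<bar> / (\<bar>Q\<bar> + 1))" by (simp add: s_def)
    also have "\<dots> \<le> K * 1" using K0 by (intro mult_left_mono) simp_all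
    finally show False using K0 by simp
  qed
  have "2 * (T / K) * K \<le> (T / K)^2 * Q + T" by (rule main)
  then have "2 * T \<le> T^2 / K^2 * Q + T" using K0 by (simp add: power_divide)
  then have "T \<le> T^2 / K^2 * Q" by simp
  then have "T * K^2 \<le> T^2 * Q" using K0 by (simp add: field_simps)
  then have "K^2 \<le> T * Q" using Tpos by (simp add: power2_eq_square mult.assoc)
  then show "(real CARD('k))^2 \<le> T * Q" by (simp add: K_def)
qed

end

context
  fixes H :: "real^'k^'d"
  assumes vH: "valid_H H"
begin

lemma sym_weighted:
  assumes ok: "okay H \<rho>"
  shows "(\<integral>x. (1 + gamma H i \<bullet> x) * (norm x)^2 \<partial>sym_law H \<rho>) = (\<integral>x. (norm x)^2 \<partial>\<rho>)"
proof -
  have F0: "Fd TYPE('d) > 0" by simp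
  have "(\<integral>x. (1 + gamma H i \<bullet> x) * (norm x)^2 \<partial>sym_law H \<rho>) =
      (1 / Fd TYPE('d)) *\<^sub>R (\<Sum>\<pi>\<in>Perms. \<integral>x. (1 + gamma H i \<bullet> (P_perm H \<pi> *v x)) * (norm (P_perm H \<pi> *v x))^2 \<partial>\<rho>)"
    by (rule sym_integral_cont(2)[OF vH ok]) (intro continuous_intros)
  also have "(\<Sum>\<pi>\<in>Perms. \<integral>x. (1 + gamma H i \<bullet> (P_perm H \<pi> *v x)) * (norm (P_perm H \<pi> *v x))^2 \<partial>\<rho>) =
      (\<Sum>\<pi>\<in>Perms. \<integral>x. (1 + gamma H i \<bullet> (P_perm H \<pi> *v x)) * (norm x)^2 \<partial>\<rho>)"
    by (intro sum.cong refl) (simp add: norm_P[OF vH])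
  also have "\<dots> = (\<integral>x. (\<Sum>\<pi>\<in>Perms. (1 + gamma H i \<bullet> (P_perm H \<pi> *v x)) * (norm x)^2) \<partial>\<rho>)"
    by (rule Bochner_Integration.integral_sum[symmetric])
       (rule okay_cont_integrable[OF vH ok],
        intro continuous_intros continuous_on_compose2[OF _ matrix_vector_mult_linear_continuous_on], auto)
  also have "\<dots> = (\<integral>x. Fd TYPE('d) * (norm x)^2 \<partial>\<rho>)"
  proof (rule Bochner_Integration.integral_cong[OF refl])
    fix x :: "real^'k"
    have "(\<Sum>\<pi>\<in>Perms. (1 + gamma H i \<bullet> (P_perm H \<pi> *v x)) * (norm x)^2) =
        ((\<Sum>\<pi>\<in>(Perms::('d\<Rightarrow>'d) set). 1) + (\<Sum>\<pi>\<in>Perms. gamma H i \<bullet> (P_perm H \<pi> *v x))) * (norm x)^2"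
      by (simp only: sum_distrib_right[symmetric] sum.distrib)
    also have "\<dots> = Fd TYPE('d) * (norm x)^2"
      by (simp add: PW_gamma[OF vH] card_Perms)
    finally show "(\<Sum>\<pi>\<in>Perms. (1 + gamma H i \<bullet> (P_perm H \<pi> *v x)) * (norm x)^2) = Fd TYPE('d) * (norm x)^2" .
  qed
  also have "\<dots> = Fd TYPE('d) * (\<integral>x. (norm x)^2 \<partial>\<rho>)" by simp
  finally show ?thesis using F0 by simp
qed

lemma part_ii:
  assumes d2: "CARD('d) \<ge> 2" and kd: "CARD('k) = CARD('d) - 1" and n1: "n \<ge> 1"
    and g: "good H \<rho>"
  shows "(SUP \<theta>\<in>Theta_n n. R_fc H n \<theta> (sym_law H \<rho>)) \<le> (SUP \<theta>\<in>Theta_n n. R_fc H n \<theta> \<rho>)"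
proof (cases "invertible (Sigma_mat \<rho>)")
  case False
  obtain j :: 'd where True by blast
  have "R_fc H n (axis j 1) \<rho> = \<infinity>" using False by (simp add: R_fc_def)
  then have "\<top> \<le> (SUP \<theta>\<in>Theta_n n. R_fc H n \<theta> \<rho>)"
    using SUP_upper[OF axis_Theta[OF n1, of j], of "\<lambda>\<theta>. R_fc H n \<theta> \<rho>"] by simp
  then show ?thesis using top_greatest order_trans by blast
next
  case inv: True
  define S where "S = Sigma_mat \<rho>"
  define B where "B = matrix_inv S"
  define T where "T = (\<integral>x. (norm x)^2 \<partial>\<rho>)"
  define Q where "Q = (\<integral>x. (norm (B *v x))^2 \<partial>\<rho>)"
  define K where "K = real CARD('k)"
  define d where "d = real CARD('d)"
  define c where "c = T / K"
  have ok: "okay H \<rho>" using g unfolding good_def by auto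
  have gs: "good H (sym_law H \<rho>)" by (rule sym_good[OF vH g])
  have k1: "CARD('k) \<ge> 1" using kd d2 by simp
  have K0: "K > 0" using k1 by (simp add: K_def)
  have Kd: "real (CARD('d) - 1) = K" using kd by (simp add: K_def)
  note cs = CS_ineq[OF vH ok inv k1]
  have T0: "T > 0" using cs(1) by (simp add: T_def)
  have KTQ: "K^2 \<le> T * Q" using cs(2) by (simp add: T_def Q_def K_def B_def S_def)
  have c0: "c > 0" using T0 K0 by (simp add: c_def)
  have Sbar: "Sigma_mat (sym_law H \<rho>) = c *\<^sub>R mat 1"
    using part_iii[OF vH d2 g] trace_Sigma[OF vH ok] Kd by (simp add: c_def T_def)
  have invb: "invertible (Sigma_mat (sym_law H \<rho>))" using scal_mat_inv(1)[of c] c0 Sbar by simp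
  have Bb: "matrix_inv (Sigma_mat (sym_law H \<rho>)) = (1 / c) *\<^sub>R mat 1"
    using scal_mat_inv(2)[of c] c0 Sbar by simp
  define vb where "vb = (1 / c)^2 * T - (1 - 1 / d)"
  have vbar: "vW H (sym_law H \<rho>) i = vb" for i
  proof -
    have "vW H (sym_law H \<rho>) i =
        (\<integral>x. (1 + gamma H i \<bullet> x) * (norm ((1 / c) *\<^sub>R mat 1 *v x))^2 \<partial>sym_law H \<rho>) - (1 - 1 / d)"
      using vW_eq[OF vH gs invb, of i] Bb by (simp add: d_def)
    also have "(\<integral>x. (1 + gamma H i \<bullet> x) * (norm ((1 / c) *\<^sub>R mat 1 *v x))^2 \<partial>sym_law H \<rho>) =
        (\<integral>x. (1 / c)^2 * ((1 + gamma H i \<bullet> x) * (norm x)^2) \<partial>sym_law H \<rho>)"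
      by (rule Bochner_Integration.integral_cong[OF refl])
         (simp add: scal_mat_vec power_mult_distrib abs_of_pos[OF c0] power_divide)
    also have "\<dots> = (1 / c)^2 * T"
      using sym_weighted[OF ok, of i] by (simp add: T_def)
    finally show ?thesis by (simp add: vb_def)
  qed
  define v where "v j = vW H \<rho> j" for j
  have vj: "v j = (\<integral>x. (1 + gamma H j \<bullet> x) * (norm (B *v x))^2 \<partial>\<rho>) - (1 - 1 / d)" for j
    unfolding v_def using vW_eq[OF vH g inv, of j] by (simp add: B_def S_def d_def)
  have sumv: "(\<Sum>j\<in>UNIV. v j) = d * (Q - (1 - 1 / d))"
  proof -
    have cB: "continuous_on UNIV (\<lambda>x. B *v x)" by (rule matrix_vector_mult_linear_continuous_on)
    have "(\<Sum>j\<in>UNIV. \<integral>x. (1 + gamma H j \<bullet> x) * (norm (B *v x))^2 \<partial>\<rho>) =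
        (\<integral>x. (\<Sum>j\<in>UNIV. (1 + gamma H j \<bullet> x) * (norm (B *v x))^2) \<partial>\<rho>)"
      by (rule Bochner_Integration.integral_sum[symmetric])
         (rule okay_cont_integrable[OF vH ok], intro continuous_intros cB)
    also have "\<dots> = (\<integral>x. d * (norm (B *v x))^2 \<partial>\<rho>)"
    proof (rule Bochner_Integration.integral_cong[OF refl])
      fix x :: "real^'k"
      have "(\<Sum>j\<in>UNIV. (1 + gamma H j \<bullet> x) * (norm (B *v x))^2) =
          ((\<Sum>j\<in>(UNIV::'d set). 1) + (\<Sum>j\<in>UNIV. gamma H j \<bullet> x)) * (norm (B *v x))^2"
        by (simp only: sum_distrib_right[symmetric] sum.distrib)
      then show "(\<Sum>j\<in>UNIV. (1 + gamma H j \<bullet> x) * (norm (B *v x))^2) = d * (norm (B *v x))^2"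
        by (simp add: sum_gamma_inner[OF vH] d_def)
    qed
    also have "\<dots> = d * Q" by (simp add: Q_def)
    finally have "(\<Sum>j\<in>UNIV. \<integral>x. (1 + gamma H j \<bullet> x) * (norm (B *v x))^2 \<partial>\<rho>) = d * Q" .
    note I = this
    have "(\<Sum>j\<in>UNIV. v j) = (\<Sum>j\<in>UNIV. \<integral>x. (1 + gamma H j \<bullet> x) * (norm (B *v x))^2 \<partial>\<rho>)
        - (\<Sum>j\<in>(UNIV::'d set). (1 - 1 / d))"
      by (simp only: vj sum_subtractf)
    also have "\<dots> = d * Q - d * (1 - 1 / d)" by (simp only: I) (simp add: d_def)
    finally show ?thesis by (simp add: algebra_simps)
  qed
  obtain j where jbig: "v j \<ge> Q - (1 - 1 / d)"
  proof (rule ccontr)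
    assume "\<not> thesis"
    then have lt: "v j < Q - (1 - 1 / d)" for j using that not_le by metis
    have "(\<Sum>j\<in>UNIV. v j) < (\<Sum>j\<in>(UNIV::'d set). Q - (1 - 1 / d))"
      by (rule sum_strict_mono) (simp_all add: lt)
    then show False using sumv by (simp add: d_def)
  qed
  have vb_le: "vb \<le> v j"
  proof -
    have "(1 / c)^2 * T = K^2 / T" using T0 K0 by (simp add: c_def power_divide field_simps power2_eq_square)
    also have "\<dots> \<le> Q" using KTQ T0 by (simp add: divide_le_eq mult.commute)
    finally show ?thesis using jbig by (simp add: vb_def)
  qed
  have Rj: "R_fc H n (axis j 1) \<rho> = ennreal ((1 / real n) * v j)"
  proof -
    have "(\<Sum>i\<in>UNIV. axis j 1 $ i * vW H \<rho> i) = vW H \<rho> j"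
      by (simp add: axis_def ifz1)
    then show ?thesis using risk_eq[OF vH n1 g inv axis_Theta[OF n1, of j]] by (simp add: v_def)
  qed
  show ?thesis
  proof (rule SUP_least)
    fix \<theta> :: "real^'d" assume th: "\<theta> \<in> Theta_n n"
    have "R_fc H n \<theta> (sym_law H \<rho>) = ennreal ((1 / real n) * (\<Sum>i\<in>UNIV. \<theta> $ i * vb))"
      using risk_eq[OF vH n1 gs invb th] by (simp add: vbar)
    also have "\<dots> = ennreal ((1 / real n) * vb)"
      by (simp add: sum_distrib_right[symmetric] sum_theta[OF th])
    also have "\<dots> \<le> ennreal ((1 / real n) * v j)"
      by (rule ennreal_leI) (use vb_le in \<open>simp add: divide_right_mono\<close>)
    also have "\<dots> = R_fc H n (axis j 1) \<rho>" by (rule Rj[symmetric])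
    also have "\<dots> \<le> (SUP \<theta>\<in>Theta_n n. R_fc H n \<theta> \<rho>)"
      by (rule SUP_upper[OF axis_Theta[OF n1]])
    finally show "R_fc H n \<theta> (sym_law H \<rho>) \<le> (SUP \<theta>\<in>Theta_n n. R_fc H n \<theta> \<rho>)" .
  qed
qed

end

theorem theorem6p1:
  fixes H :: "real^'k^'d" and \<rho> :: "(real^'k) measure" and n :: nat
  assumes "CARD('d) \<ge> 2" and "CARD('k) = CARD('d) - 1" and "n \<ge> 1"
    and "valid_H H" and "anchored H \<rho>"
  shows "chi_star H (sym_law H \<rho>) \<le> chi_star H \<rho>
    \<and> (SUP \<theta>\<in>Theta_n n. R_fc H n \<theta> (sym_law H \<rho>)) \<le> (SUP \<theta>\<in>Theta_n n. R_fc H n \<theta> \<rho>)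
    \<and> Sigma_mat (sym_law H \<rho>) = (trace (Sigma_mat \<rho>) / real (CARD('d) - 1)) *\<^sub>R mat 1"
proof -
  have g: "good H \<rho>" by (rule anchored_good[OF assms(4,5)])
  show ?thesis
    using part_i[OF assms(4,1) g] part_ii[OF assms(4,1,2,3) g] part_iii[OF assms(4,1) g] by blast
qed

end
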